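(* Let $0<q<1$, let $g:\mathbb{N}\to\mathbb{R}$ be any function with $g(n)\to\infty$ (e.g. $g(n)=\log^2 n$), let $\Pi_n\sim\mathrm{Mallows}(n,q)$, and let $\Pi,\Pi'\sim\mathrm{Mallows}(\mathbb{N},q)$ be independent. With $r_n(i):=n+1-i$, there is a coupling of $\Pi_n,\Pi,\Pi'$ (with $\Pi,\Pi'$ independent) such that $$\mathbb{P}\Bigl(\Pi_n(i)=\Pi(i)\ \text{for all }1\le i\le n/2-g(n),\ \text{and}\ \Pi_n(i)=(r_n\circ\Pi'\circ r_n)(i)\ \text{for all }n/2+g(n)\le i\le n\Bigr)=1-o(1)$$ as $n\to\infty$.
   Context: For $q>0$, $\Pi_n\sim\mathrm{Mallows}(n,q)$ means $\mathbb{P}(\Pi_n=\pi)\propto q^{\mathrm{inv}(\pi)}$ over permutations $\pi$ of $[n]=\{1,\dots,n\}$, where $\mathrm{inv}(\pi)$ is the number of pairs $i<j$ with $\pi(i)>\pi(j)$. For $0<q<1$, $\Pi\sim\mathrm{Mallows}(\mathbb{N},q)$ is the random injection $\mathbb{N}\to\mathbb{N}$ constructed as follows: let $Z_1,Z_2,\dots$ be i.i.d. geometric with $\mathbb{P}(Z_i=k)=(1-q)q^{k-1}$, $k\ge1$; set $\Pi(1)=Z_1$ and, for $i>1$, let $\Pi(i)$ be the $Z_i$-th smallest element of $\mathbb{N}\setminus\{\Pi(1),\dots,\Pi(i-1)\}$. The composition $r_n\circ\Pi'\circ r_n$ is evaluated only at $i$ with $r_n(i)\ge1$. *)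

theory Defs
  imports "HOL-Probability.Probability"
begin

text \<open>Permutations of [n] = {1..n} are represented as functions nat => nat that
  permute {1..n} (and are the identity elsewhere).\<close>

definition inv_count :: "nat \<Rightarrow> (nat \<Rightarrow> nat) \<Rightarrow> nat" where
  "inv_count n \<pi> = card {(i, j). 1 \<le> i \<and> i < j \<and> j \<le> n \<and> \<pi> i > \<pi> j}"

definition mallows_weight :: "nat \<Rightarrow> real \<Rightarrow> (nat \<Rightarrow> nat) \<Rightarrow> real" where
  "mallows_weight n q \<pi> =
     (if \<pi> permutes {1..n}
      then q ^ inv_count n \<pi> / (\<Sum>\<sigma>\<in>{\<sigma>. \<sigma> permutes {1..n}}. q ^ inv_count n \<sigma>)
      else 0)"

definition mallows :: "nat \<Rightarrow> real \<Rightarrow> (nat \<Rightarrow> nat) pmf" where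
  "mallows n q = embed_pmf (mallows_weight n q)"

abbreviation NN :: "(nat \<Rightarrow> nat) measure" where
  "NN \<equiv> PiM UNIV (\<lambda>_. count_space UNIV)"

text \<open>Here Z k (k = 0,1,...) is
  0-based geometric, so Z_{k+1} = Z k + 1 in the paper's notation; Pi(i) is the
  (Z_i)-th smallest element of {1,2,...} minus the previously chosen values, i.e.
  enumerate (...) (Z (i-1)) (enumerate is 0-indexed).\<close>
fun mal_list :: "(nat \<Rightarrow> nat) \<Rightarrow> nat \<Rightarrow> nat list" where
  "mal_list Z 0 = []"
| "mal_list Z (Suc k) = mal_list Z k @ [enumerate ({1..} - set (mal_list Z k)) (Z k)]"

definition mal_inj :: "(nat \<Rightarrow> nat) \<Rightarrow> nat \<Rightarrow> nat" where
  "mal_inj Z i = (if i \<ge> 1 then mal_list Z i ! (i - 1) else 0)"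

definition mallows_N :: "real \<Rightarrow> (nat \<Rightarrow> nat) measure" where
  "mallows_N q = distr (PiM UNIV (\<lambda>_. measure_pmf (geometric_pmf (1 - q)))) NN mal_inj"

definition good_event :: "(nat \<Rightarrow> real) \<Rightarrow> nat \<Rightarrow> ((nat \<Rightarrow> nat) \<times> (nat \<Rightarrow> nat) \<times> (nat \<Rightarrow> nat)) set" where
  "good_event g n = {(x, y, y').
      (\<forall>i. 1 \<le> i \<and> real i \<le> real n / 2 - g n \<longrightarrow> x i = y i) \<and>
      (\<forall>i. real n / 2 + g n \<le> real i \<and> i \<le> n \<longrightarrow>
            int (x i) = int n + 1 - int (y' (n + 1 - i)))}"

end

theory Submission
  imports Defs
begin

definition rk :: "nat set \<Rightarrow> nat \<Rightarrow> nat" where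
  "rk S x = card {y\<in>S. y < x}"

lemma rk_enum_inf:
  fixes S :: "nat set"
  assumes "infinite S"
  shows "rk S (enumerate S n) = n"
proof -
  have sm: "strict_mono (enumerate S)" using strict_mono_enumerate[OF assms] .
  have "{y\<in>S. y < enumerate S n} = enumerate S ` {..<n}"
  proof (intro set_eqI iffI)
    fix y assume "y \<in> {y\<in>S. y < enumerate S n}"
    then obtain j where "enumerate S j = y" "y < enumerate S n" using enumerate_Ex[OF assms] by auto
    moreover have "j < n" using calculation strict_mono_less[OF sm, of j n] by simp
    ultimately show "y \<in> enumerate S ` {..<n}" by auto
  next
    fix y assume "y \<in> enumerate S ` {..<n}"
    then show "y \<in> {y\<in>S. y < enumerate S n}" using sm enumerate_in_set[OF assms] by (auto simp: strict_mono_less)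
  qed
  moreover have "inj_on (enumerate S) {..<n}" using sm strict_mono_imp_inj_on by blast
  ultimately show ?thesis unfolding rk_def by (simp add: card_image)
qed

lemma enum_rk_inf:
  fixes S :: "nat set"
  assumes "infinite S" "x \<in> S"
  shows "enumerate S (rk S x) = x"
proof -
  obtain j where "enumerate S j = x" using enumerate_Ex[OF assms] by blast
  then show ?thesis using rk_enum_inf[OF assms(1), of j] by simp
qed

lemma rk_enum_fin:
  fixes S :: "nat set"
  assumes "finite S" "n < card S"
  shows "rk S (enumerate S n) = n"
proof -
  have bij: "bij_betw (enumerate S) {..<card S} S" by (rule finite_bij_enumerate[OF assms(1)])
  have mono: "\<And>a b. a < b \<Longrightarrow> b < card S \<Longrightarrow> enumerate S a < enumerate S b"
    using finite_enumerate_mono[OF _ assms(1)] by blast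
  have "{y\<in>S. y < enumerate S n} = enumerate S ` {..<n}"
  proof (intro set_eqI iffI)
    fix y assume y: "y \<in> {y\<in>S. y < enumerate S n}"
    then obtain j where j: "j < card S" "enumerate S j = y" using finite_enumerate_Ex[OF assms(1)] by blast
    have "j < n"
    proof (rule ccontr)
      assume "\<not> j < n"
      then consider "j = n" | "n < j" by linarith
      then have "enumerate S n \<le> enumerate S j"
      proof cases
        case 1 then show ?thesis by simp
      next
        case 2 then show ?thesis using mono[of n j] j(1) by simp
      qed
      then show False using y j by auto
    qed
    then show "y \<in> enumerate S ` {..<n}" using j by auto
  next
    fix y assume "y \<in> enumerate S ` {..<n}"
    then obtain j where j: "j < n" "y = enumerate S j" by auto
    have "y \<in> S" using j assms finite_enumerate_in_set[OF assms(1), of j] by simp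
    moreover have "y < enumerate S n" using mono[of j n] j assms(2) by simp
    ultimately show "y \<in> {y\<in>S. y < enumerate S n}" by simp
  qed
  moreover have "inj_on (enumerate S) {..<n}"
    by (rule inj_on_subset[OF bij_betw_imp_inj_on[OF bij]]) (use assms(2) in auto)
  ultimately show ?thesis unfolding rk_def by (simp add: card_image)
qed

lemma enum_rk_fin:
  fixes S :: "nat set"
  assumes "finite S" "x \<in> S"
  shows "enumerate S (rk S x) = x" "rk S x < card S"
proof -
  obtain j where j: "j < card S" "enumerate S j = x" using finite_enumerate_Ex[OF assms] by blast
  then have "rk S x = j" using rk_enum_fin[OF assms(1) j(1)] by simp
  then show "enumerate S (rk S x) = x" "rk S x < card S" using j by auto
qed

lemma enum_eq_iff_fin:
  fixes S :: "nat set"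
  assumes "finite S" "x \<in> S" "k < card S"
  shows "enumerate S k = x \<longleftrightarrow> rk S x = k"
proof
  assume "enumerate S k = x" then show "rk S x = k" using rk_enum_fin[OF assms(1,3)] by simp
next
  assume "rk S x = k" then show "enumerate S k = x" using enum_rk_fin(1)[OF assms(1,2)] by simp
qed

lemma rk_plus_above:
  fixes S :: "nat set"
  assumes "finite S" "x \<in> S"
  shows "rk S x + card {y\<in>S. y > x} + 1 = card S"
proof -
  have "S = {y\<in>S. y < x} \<union> {y\<in>S. y > x} \<union> {x}" using assms by auto
  then have "card S = card ({y\<in>S. y < x} \<union> {y\<in>S. y > x} \<union> {x})" by simp
  also have "\<dots> = card {y\<in>S. y < x} + card {y\<in>S. y > x} + 1"
  proof -
    have f: "finite {y\<in>S. y < x}" "finite {y\<in>S. y > x}" using assms(1) by auto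
    have "card ({y\<in>S. y < x} \<union> {y\<in>S. y > x} \<union> {x}) = card ({y\<in>S. y < x} \<union> {y\<in>S. y > x}) + card {x}"
      by (rule card_Un_disjoint) (use f in auto)
    also have "card ({y\<in>S. y < x} \<union> {y\<in>S. y > x}) = card {y\<in>S. y < x} + card {y\<in>S. y > x}"
      by (rule card_Un_disjoint) (use f in auto)
    finally show ?thesis by simp
  qed
  finally show ?thesis unfolding rk_def by simp
qed

lemma length_mal_list [simp]: "length (mal_list Z k) = k"
  by (induction k) auto

lemma mal_list_nth: "i < k \<Longrightarrow> mal_list Z k ! i = mal_inj Z (Suc i)"
proof (induction k)
  case 0 then show ?case by simp
next
  case (Suc k)
  show ?case
  proof (cases "i < k")
    case True then show ?thesis using Suc by (simp add: nth_append)
  next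
    case False then have "i = k" using Suc by simp
    then show ?thesis by (simp add: mal_inj_def)
  qed
qed

lemma set_mal_list: "set (mal_list Z k) = mal_inj Z ` {1..k}"
proof -
  have "set (mal_list Z k) = (\<lambda>i. mal_list Z k ! i) ` {..<k}" by (auto simp: set_conv_nth)
  also have "\<dots> = (\<lambda>i. mal_inj Z (Suc i)) ` {..<k}" by (rule image_cong) (auto simp: mal_list_nth)
  also have "\<dots> = mal_inj Z ` {1..k}"
  proof (intro set_eqI iffI)
    fix y assume "y \<in> (\<lambda>i. mal_inj Z (Suc i)) ` {..<k}"
    then obtain i where "i < k" "y = mal_inj Z (Suc i)" by auto
    then show "y \<in> mal_inj Z ` {1..k}" by (intro image_eqI[of _ _ "Suc i"]) auto
  next
    fix y assume "y \<in> mal_inj Z ` {1..k}"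
    then obtain i where "i \<in> {1..k}" "y = mal_inj Z i" by auto
    then show "y \<in> (\<lambda>i. mal_inj Z (Suc i)) ` {..<k}" by (intro image_eqI[of _ _ "i - 1"]) auto
  qed
  finally show ?thesis .
qed

lemma mal_inj_Suc: "mal_inj Z (Suc k) = enumerate ({1..} - mal_inj Z ` {1..k}) (Z k)"
proof -
  have "mal_inj Z (Suc k) = mal_list Z (Suc k) ! k" by (simp add: mal_inj_def)
  also have "\<dots> = enumerate ({1..} - set (mal_list Z k)) (Z k)" by (simp add: nth_append)
  finally show ?thesis by (simp only: set_mal_list)
qed

lemma infinite_Ici1 [simp]: "infinite {Suc 0..}" "infinite {1::nat..}"
proof -
  have "{1::nat..} = UNIV - {0}" by auto
  then show "infinite {1::nat..}" by (simp add: Diff_infinite_finite)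
  then show "infinite {Suc 0..}" by simp
qed

lemma infinite_U': assumes "finite (F::nat set)" shows "infinite ({1..} - F)"
  using assms by (simp add: Diff_infinite_finite)

lemma mal_inj_mem: "mal_inj Z (Suc k) \<in> {1..} - mal_inj Z ` {1..k}"
  unfolding mal_inj_Suc by (rule enumerate_in_set) (simp add: infinite_U')

lemma mal_inj_ge1: "k \<ge> 1 \<Longrightarrow> mal_inj Z k \<ge> 1"
  using mal_inj_mem[of Z "k - 1"] by simp

lemma mal_inj_inj: "inj_on (mal_inj Z) {1..}"
proof (rule inj_onI)
  fix a b assume ab: "a \<in> {1..}" "b \<in> {1..}" "mal_inj Z a = mal_inj Z b"
  show "a = b"
  proof (rule ccontr)
    assume "a \<noteq> b"
    then consider "a < b" | "b < a" by linarith
    then show False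
    proof cases
      case 1
      have "mal_inj Z (Suc (b - 1)) \<notin> mal_inj Z ` {1..b-1}" using mal_inj_mem[of Z "b-1"] by blast
      moreover have "a \<in> {1..b-1}" "Suc (b-1) = b" using 1 ab by auto
      ultimately show False using ab(3) by (metis image_eqI)
    next
      case 2
      have "mal_inj Z (Suc (a - 1)) \<notin> mal_inj Z ` {1..a-1}" using mal_inj_mem[of Z "a-1"] by blast
      moreover have "b \<in> {1..a-1}" "Suc (a-1) = a" using 2 ab by auto
      ultimately show False using ab(3) by (metis image_eqI)
    qed
  qed
qed

lemma rk_mal_inj: "rk ({1..} - mal_inj Z ` {1..k}) (mal_inj Z (Suc k)) = Z k"
  unfolding mal_inj_Suc by (rule rk_enum_inf) (simp add: infinite_U')

lemma mal_inj_bound: "mal_inj Z (Suc k) \<le> Suc k + Z k"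
proof -
  define U where "U = {1..} - mal_inj Z ` {1..k}"
  define A where "A = mal_inj Z (Suc k)"
  have r: "card {y\<in>U. y < A} = Z k" using rk_mal_inj[of Z k] unfolding rk_def U_def A_def .
  have "{1..<A} \<subseteq> {y\<in>U. y < A} \<union> mal_inj Z ` {1..k}" unfolding U_def by auto
  then have "card {1..<A} \<le> card ({y\<in>U. y < A} \<union> mal_inj Z ` {1..k})"
    by (intro card_mono) (auto simp: U_def)
  also have "\<dots> \<le> card {y\<in>U. y < A} + card (mal_inj Z ` {1..k})" by (rule card_Un_le)
  also have "\<dots> \<le> Z k + k" using r card_image_le[of "{1..k}" "mal_inj Z"] by simp
  finally show ?thesis unfolding A_def by simp
qed

fun proc :: "(nat\<Rightarrow>nat) \<Rightarrow> (nat\<Rightarrow>nat) \<Rightarrow> nat \<Rightarrow> nat \<Rightarrow> nat set \<Rightarrow> nat \<Rightarrow> nat" where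
  "proc Z Z' t 0 T = (\<lambda>_. 0)"
| "proc Z Z' t (Suc 0) T = (\<lambda>_. 0)(Suc t := enumerate T 0)"
| "proc Z Z' t (Suc (Suc m)) T =
    (let l = enumerate T (Z t mod Suc (Suc m)); T1 = T - {l};
         r = enumerate T1 (card T1 - 1 - Z' t mod Suc m)
     in (proc Z Z' (Suc t) m (T1 - {r}))(Suc t := l, Suc t + Suc m := r))"

lemma enum_singleton [simp]: "enumerate {a::nat} 0 = a"
  by (simp add: enumerate_0 Least_equality)

lemma proc_bij:
  "finite T \<Longrightarrow> card T = m \<Longrightarrow>
    proc Z Z' t m T ` {Suc t..t+m} = T \<and> inj_on (proc Z Z' t m T) {Suc t..t+m}"
proof (induction Z Z' t m T rule: proc.induct)
  case (1 Z Z' t T)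
  then show ?case by simp
next
  case (2 Z Z' t T)
  then obtain a where "T = {a}" by (metis card_1_singletonE One_nat_def)
  then show ?case by simp
next
  case (3 Z Z' t m T)
  define l where "l = enumerate T (Z t mod Suc (Suc m))"
  define T1 where "T1 = T - {l}"
  define r where "r = enumerate T1 (card T1 - 1 - Z' t mod Suc m)"
  define rest where "rest = proc Z Z' (Suc t) m (T1 - {r})"
  have l: "l \<in> T" unfolding l_def using 3 by (intro finite_enumerate_in_set) auto
  have cT1: "card T1 = Suc m" "finite T1" using 3 l unfolding T1_def by auto
  have r: "r \<in> T1" unfolding r_def using cT1 by (intro finite_enumerate_in_set) auto
  have c2: "card (T1 - {r}) = m" "finite (T1 - {r})" using cT1 r by auto
  have IH: "rest ` {Suc (Suc t)..Suc t+m} = T1 - {r}" "inj_on rest {Suc (Suc t)..Suc t+m}"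
    using "3.IH"[OF l_def T1_def r_def c2(2) c2(1)] unfolding rest_def by auto
  have eq: "proc Z Z' t (Suc (Suc m)) T = rest(Suc t := l, Suc t + Suc m := r)"
    by (simp only: proc.simps Let_def l_def[symmetric] T1_def[symmetric] r_def[symmetric] rest_def[symmetric])
  have P: "{Suc t..t + Suc (Suc m)} = insert (Suc t) (insert (Suc t + Suc m) {Suc (Suc t)..Suc t+m})" by auto
  have img: "(rest(Suc t := l, Suc t + Suc m := r)) ` {Suc (Suc t)..Suc t+m} = rest ` {Suc (Suc t)..Suc t+m}"
    by (intro image_cong) auto
  have injin: "inj_on (rest(Suc t := l, Suc t + Suc m := r)) {Suc (Suc t)..Suc t+m}"
    using IH(2) by (auto simp: inj_on_def)
  have lT1: "l \<notin> T1" "r \<noteq> l" using r unfolding T1_def by auto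
  show ?case unfolding eq P
  proof
    show "(rest(Suc t := l, Suc t + Suc m := r)) ` insert (Suc t) (insert (Suc t + Suc m) {Suc (Suc t)..Suc t + m}) = T"
    proof -
      let ?s = "rest(Suc t := l, Suc t + Suc m := r)"
      have "?s ` insert (Suc t) (insert (Suc t + Suc m) {Suc (Suc t)..Suc t + m}) =
            insert (?s (Suc t)) (insert (?s (Suc t + Suc m)) (?s ` {Suc (Suc t)..Suc t + m}))"
        by (simp only: image_insert)
      also have "\<dots> = insert l (insert r (T1 - {r}))" using img IH(1) by simp
      also have "\<dots> = T" using l r unfolding T1_def by auto
      finally show ?thesis .
    qed
    show "inj_on (rest(Suc t := l, Suc t + Suc m := r)) (insert (Suc t) (insert (Suc t + Suc m) {Suc (Suc t)..Suc t + m}))"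
    proof -
      let ?s = "rest(Suc t := l, Suc t + Suc m := r)"
      let ?X = "{Suc (Suc t)..Suc t + m}"
      have X1: "?X - {Suc t + Suc m} = ?X" "insert (Suc t + Suc m) ?X - {Suc t} = insert (Suc t + Suc m) ?X" by auto
      have v: "?s (Suc t) = l" "?s (Suc t + Suc m) = r" by auto
      have "r \<notin> ?s ` ?X" "l \<notin> insert r (?s ` ?X)" unfolding img IH(1) using lT1 by auto
      then show ?thesis unfolding inj_on_insert X1 image_insert v using injin by blast
    qed
  qed
qed

definition lc :: "(nat \<Rightarrow> nat) \<Rightarrow> nat \<Rightarrow> nat \<Rightarrow> nat" where
  "lc \<tau> t m = card {j\<in>{Suc (Suc t)..t+m}. \<tau> j < \<tau> (Suc t)}"

definition rc :: "(nat \<Rightarrow> nat) \<Rightarrow> nat \<Rightarrow> nat \<Rightarrow> nat" where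
  "rc \<tau> t m = card {j\<in>{Suc (Suc t)..t+m-1}. \<tau> j > \<tau> (t+m)}"

definition codes_ok :: "(nat\<Rightarrow>nat) \<Rightarrow> (nat\<Rightarrow>nat) \<Rightarrow> (nat \<Rightarrow> nat) \<Rightarrow> nat \<Rightarrow> nat \<Rightarrow> bool" where
  "codes_ok Z Z' \<tau> t m \<longleftrightarrow>
     (\<forall>s<(m+1) div 2. Z (t+s) mod (m-2 * s) = lc \<tau> (t+s) (m-2 * s)) \<and>
     (\<forall>s<m div 2. Z' (t+s) mod (m-2 * s-1) = rc \<tau> (t+s) (m-2 * s))"

lemma codes_ok_step:
  "codes_ok Z Z' \<tau> t (Suc (Suc m)) \<longleftrightarrow>
     Z t mod Suc (Suc m) = lc \<tau> t (Suc (Suc m)) \<and> Z' t mod Suc m = rc \<tau> t (Suc (Suc m)) \<and>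
     codes_ok Z Z' \<tau> (Suc t) m"
proof -
  have a: "(Suc (Suc m) + 1) div 2 = Suc ((m+1) div 2)" "Suc (Suc m) div 2 = Suc (m div 2)" by auto
  have b: "(\<forall>s<Suc k. P s) \<longleftrightarrow> P 0 \<and> (\<forall>s<k. P (Suc s))" for P and k :: nat
    using less_Suc_eq_0_disj by auto
  show ?thesis unfolding codes_ok_def a b apply (simp add: algebra_simps) by blast
qed

lemma filter_drop_first: "\<not> P (a::nat) \<Longrightarrow> {j\<in>{a..b}. P j} = {j\<in>{Suc a..b}. P j}"
  by (force simp: Suc_le_eq le_less)

lemma img_filter: "{y\<in>f ` P. Q y} = f ` {j\<in>P. Q (f j)}"
  by auto

lemma img_diff1: "inj_on f A \<Longrightarrow> a \<in> A \<Longrightarrow> f ` A - {f a} = f ` (A - {a})"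
  by (auto simp: inj_on_def)

lemma proc_codes:
  "bij_betw \<tau> {Suc t..t+m} T \<Longrightarrow>
   (\<forall>i\<in>{Suc t..t+m}. proc Z Z' t m T i = \<tau> i) \<longleftrightarrow> codes_ok Z Z' \<tau> t m"
proof (induction Z Z' t m T arbitrary: \<tau> rule: proc.induct)
  case (1 Z Z' t T)
  then show ?case by (simp add: codes_ok_def)
next
  case (2 Z Z' t T)
  then have "T = {\<tau> (Suc t)}" by (auto simp: bij_betw_def)
  then show ?case by (simp add: codes_ok_def lc_def)
next
  case (3 Z Z' t m T)
  define hi where "hi = Suc t + Suc m"
  define l where "l = enumerate T (Z t mod Suc (Suc m))"
  define T1 where "T1 = T - {l}"
  define r where "r = enumerate T1 (card T1 - 1 - Z' t mod Suc m)"
  define rest where "rest = proc Z Z' (Suc t) m (T1 - {r})"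
  have bij: "bij_betw \<tau> {Suc t..hi} T" using "3.prems" unfolding hi_def by (simp add: add.commute)
  have inj: "inj_on \<tau> {Suc t..hi}" and Tim: "T = \<tau> ` {Suc t..hi}" using bij by (auto simp: bij_betw_def)
  have fin: "finite T" and cT: "card T = Suc (Suc m)" using Tim inj by (auto simp: card_image hi_def)
  have eq: "proc Z Z' t (Suc (Suc m)) T = rest(Suc t := l, hi := r)"
    by (simp only: proc.simps Let_def l_def[symmetric] T1_def[symmetric] r_def[symmetric] rest_def[symmetric] hi_def[symmetric])
  have P: "{Suc t..t + Suc (Suc m)} = insert (Suc t) (insert hi {Suc (Suc t)..Suc t+m})" by (auto simp: hi_def)
  have LHS: "(\<forall>i\<in>{Suc t..t+Suc (Suc m)}. proc Z Z' t (Suc (Suc m)) T i = \<tau> i) \<longleftrightarrow>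
      l = \<tau> (Suc t) \<and> r = \<tau> hi \<and> (\<forall>i\<in>{Suc (Suc t)..Suc t+m}. rest i = \<tau> i)"
    unfolding eq P by (auto simp: hi_def)
  have A: "l = \<tau> (Suc t) \<longleftrightarrow> Z t mod Suc (Suc m) = lc \<tau> t (Suc (Suc m))"
  proof -
    have mem: "\<tau> (Suc t) \<in> T" using Tim by (auto simp: hi_def)
    have "l = \<tau> (Suc t) \<longleftrightarrow> rk T (\<tau> (Suc t)) = Z t mod Suc (Suc m)"
      unfolding l_def using enum_eq_iff_fin[OF fin mem, of "Z t mod Suc (Suc m)"] cT by auto
    moreover have "{y\<in>T. y < \<tau> (Suc t)} = \<tau> ` {j\<in>{Suc (Suc t)..t+Suc (Suc m)}. \<tau> j < \<tau> (Suc t)}"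
    proof -
      have "{j\<in>{Suc t..hi}. \<tau> j < \<tau> (Suc t)} = {j\<in>{Suc (Suc t)..hi}. \<tau> j < \<tau> (Suc t)}"
        by (rule filter_drop_first) simp
      then have "{j\<in>{Suc t..hi}. \<tau> j < \<tau> (Suc t)} = {j\<in>{Suc (Suc t)..t+Suc (Suc m)}. \<tau> j < \<tau> (Suc t)}"
        by (simp add: hi_def)
      then show ?thesis unfolding Tim img_filter by simp
    qed
    moreover have "card (\<tau> ` {j\<in>{Suc (Suc t)..t+Suc (Suc m)}. \<tau> j < \<tau> (Suc t)}) = lc \<tau> t (Suc (Suc m))"
      unfolding lc_def by (rule card_image, rule inj_on_subset[OF inj]) (auto simp: hi_def)
    ultimately show ?thesis unfolding rk_def by auto
  qed
  have B: "l = \<tau> (Suc t) \<Longrightarrow> r = \<tau> hi \<longleftrightarrow> Z' t mod Suc m = rc \<tau> t (Suc (Suc m))"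
  proof -
    assume l: "l = \<tau> (Suc t)"
    have T1: "T1 = \<tau> ` {Suc (Suc t)..hi}"
    proof -
      have "{Suc t..hi} - {Suc t} = {Suc (Suc t)..hi}" by auto
      then show ?thesis unfolding T1_def l Tim using img_diff1[OF inj, of "Suc t"] by (simp add: hi_def)
    qed
    have inj1: "inj_on \<tau> {Suc (Suc t)..hi}" by (rule inj_on_subset[OF inj]) auto
    have fin1: "finite T1" and cT1: "card T1 = Suc m" using T1 card_image[OF inj1]
      by (auto simp: hi_def)
    have mem: "\<tau> hi \<in> T1" using T1 by (auto simp: hi_def)
    define k where "k = Z' t mod Suc m"
    have k: "k < Suc m" unfolding k_def by simp
    have "r = \<tau> hi \<longleftrightarrow> rk T1 (\<tau> hi) = m - k"
      unfolding r_def k_def[symmetric] using enum_eq_iff_fin[OF fin1 mem, of "m - k"] cT1 by auto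
    also have "\<dots> \<longleftrightarrow> card {y\<in>T1. y > \<tau> hi} = k"
      using rk_plus_above[OF fin1 mem] cT1 k by auto
    also have "card {y\<in>T1. y > \<tau> hi} = rc \<tau> t (Suc (Suc m))"
    proof -
      have "{y\<in>T1. y > \<tau> hi} = \<tau> ` {j\<in>{Suc (Suc t)..t+Suc (Suc m)-1}. \<tau> j > \<tau> (t + Suc (Suc m))}"
      proof -
        have "{j\<in>{Suc (Suc t)..hi}. \<tau> j > \<tau> hi} = {j\<in>{Suc (Suc t)..t+Suc (Suc m)-1}. \<tau> j > \<tau> (t + Suc (Suc m))}"
          by (auto simp: hi_def le_Suc_eq)
        then show ?thesis unfolding T1 img_filter by (simp add: hi_def)
      qed
      moreover have "inj_on \<tau> {j\<in>{Suc (Suc t)..t+Suc (Suc m)-1}. \<tau> j > \<tau> (t + Suc (Suc m))}"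
        by (rule inj_on_subset[OF inj]) (auto simp: hi_def)
      ultimately show ?thesis unfolding rc_def by (simp add: card_image)
    qed
    finally show ?thesis unfolding k_def by auto
  qed
  have C: "l = \<tau> (Suc t) \<Longrightarrow> r = \<tau> hi \<Longrightarrow>
      (\<forall>i\<in>{Suc (Suc t)..Suc t+m}. rest i = \<tau> i) \<longleftrightarrow> codes_ok Z Z' \<tau> (Suc t) m"
  proof -
    assume l: "l = \<tau> (Suc t)" and r: "r = \<tau> hi"
    have "T1 - {r} = \<tau> ` {Suc (Suc t)..Suc t + m}"
    proof -
      have e1: "{Suc t..hi} - {Suc t} = {Suc (Suc t)..hi}" "{Suc (Suc t)..hi} - {hi} = {Suc (Suc t)..Suc t + m}"
        by (auto simp: hi_def)
      have "T1 = \<tau> ` {Suc (Suc t)..hi}"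
        unfolding T1_def l Tim using img_diff1[OF inj, of "Suc t"] e1 by (simp add: hi_def)
      moreover have "inj_on \<tau> {Suc (Suc t)..hi}" by (rule inj_on_subset[OF inj]) auto
      ultimately show ?thesis unfolding r using img_diff1[of \<tau> "{Suc (Suc t)..hi}" hi] e1 by (simp add: hi_def)
    qed
    moreover have "inj_on \<tau> {Suc (Suc t)..Suc t + m}" by (rule inj_on_subset[OF inj]) (auto simp: hi_def)
    ultimately have "bij_betw \<tau> {Suc (Suc t)..Suc t + m} (T1 - {r})" by (simp add: bij_betw_def)
    then show ?thesis using "3.IH"[OF l_def T1_def r_def] unfolding rest_def by blast
  qed
  show ?case unfolding LHS codes_ok_step using A B C by blast
qed

definition inv_on :: "(nat \<Rightarrow> nat) \<Rightarrow> nat set \<Rightarrow> nat" where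
  "inv_on \<tau> P = card {(i,j). i\<in>P \<and> j\<in>P \<and> i<j \<and> \<tau> j < \<tau> i}"

lemma inv_on_decomp:
  "inv_on \<tau> {Suc t..t+m} =
    (\<Sum>s<(m+1) div 2. lc \<tau> (t+s) (m-2 * s)) + (\<Sum>s<m div 2. rc \<tau> (t+s) (m-2 * s))"
proof (induction m arbitrary: t rule: less_induct)
  case (less m)
  show ?case
  proof (cases m)
    case 0 then show ?thesis by (simp add: inv_on_def)
  next
    case (Suc m1)
    show ?thesis
    proof (cases m1)
      case 0
      have e: "{(i,j). i\<in>{Suc t..t+m} \<and> j\<in>{Suc t..t+m} \<and> i<j \<and> \<tau> j < \<tau> i} = {}" using Suc 0 by auto
      show ?thesis unfolding inv_on_def e using Suc 0 by (simp add: lc_def)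
    next
      case (Suc k)
      have m: "m = Suc (Suc k)" using \<open>m = Suc m1\<close> Suc by simp
      define hi where "hi = t + m"
      define S1 where "S1 = Pair (Suc t) ` {j\<in>{Suc (Suc t)..hi}. \<tau> j < \<tau> (Suc t)}"
      define S2 where "S2 = (\<lambda>i. (i, hi)) ` {j\<in>{Suc (Suc t)..hi-1}. \<tau> j > \<tau> hi}"
      define S3 where "S3 = {(i,j). i\<in>{Suc (Suc t)..Suc t+k} \<and> j\<in>{Suc (Suc t)..Suc t+k} \<and> i<j \<and> \<tau> j < \<tau> i}"
      have hi1: "hi - 1 = Suc t + k" unfolding hi_def m by simp
      have split: "{(i,j). i\<in>{Suc t..t+m} \<and> j\<in>{Suc t..t+m} \<and> i<j \<and> \<tau> j < \<tau> i} = S1 \<union> S2 \<union> S3"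
      proof (intro set_eqI iffI)
        fix x assume "x \<in> {(i,j). i\<in>{Suc t..t+m} \<and> j\<in>{Suc t..t+m} \<and> i<j \<and> \<tau> j < \<tau> i}"
        then obtain i j where x: "x = (i,j)" "i\<in>{Suc t..t+m}" "j\<in>{Suc t..t+m}" "i<j" "\<tau> j < \<tau> i" by auto
        show "x \<in> S1 \<union> S2 \<union> S3"
        proof (cases "i = Suc t")
          case True then have "x \<in> S1" unfolding S1_def using x by (auto simp: hi_def)
          then show ?thesis by simp
        next
          case False
          show ?thesis
          proof (cases "j = hi")
            case True then have "x \<in> S2" unfolding S2_def using x False by (auto simp: hi_def)
            then show ?thesis by simp
          next
            case False2: False
            then have "x \<in> S3" unfolding S3_def using x False by (auto simp: hi_def m)
            then show ?thesis by simp
          qed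
        qed
      next
        fix x assume "x \<in> S1 \<union> S2 \<union> S3"
        then show "x \<in> {(i,j). i\<in>{Suc t..t+m} \<and> j\<in>{Suc t..t+m} \<and> i<j \<and> \<tau> j < \<tau> i}"
          unfolding S1_def S2_def S3_def by (auto simp: hi_def m)
      qed
      have f: "finite S1" "finite S2" "finite S3" unfolding S1_def S2_def S3_def
        by (auto intro: finite_subset[of _ "{Suc (Suc t)..Suc t+k} \<times> {Suc (Suc t)..Suc t+k}"])
      have d: "S1 \<inter> S2 = {}" "(S1 \<union> S2) \<inter> S3 = {}" unfolding S1_def S2_def S3_def hi1 by (auto simp: hi_def m)
      have c1: "card S1 = lc \<tau> t m" unfolding S1_def lc_def hi_def by (simp add: card_image inj_on_def)
      have c2: "card S2 = rc \<tau> t m" unfolding S2_def rc_def hi_def by (simp add: card_image inj_on_def)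
      have c3: "card S3 = (\<Sum>s<(k+1) div 2. lc \<tau> (Suc t+s) (k-2 * s)) + (\<Sum>s<k div 2. rc \<tau> (Suc t+s) (k-2 * s))"
        using less.IH[of k "Suc t"] m unfolding S3_def inv_on_def by simp
      have "inv_on \<tau> {Suc t..t+m} = card S1 + card S2 + card S3"
        unfolding inv_on_def split using f d by (simp add: card_Un_disjoint)
      also have "\<dots> = (\<Sum>s<(m+1) div 2. lc \<tau> (t+s) (m-2 * s)) + (\<Sum>s<m div 2. rc \<tau> (t+s) (m-2 * s))"
      proof -
        have a: "(m + 1) div 2 = Suc ((k+1) div 2)" "m div 2 = Suc (k div 2)" using m by auto
        show ?thesis unfolding a sum.lessThan_Suc_shift c1 c2 c3 using m by (simp add: algebra_simps)
      qed
      finally show ?thesis .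
    qed
  qed
qed

lemma inv_count_eq: "inv_count n \<tau> = inv_on \<tau> {Suc 0..0+n}"
proof -
  have "{(i, j). 1 \<le> i \<and> i < j \<and> j \<le> n \<and> \<tau> i > \<tau> j} = {(i,j). i\<in>{Suc 0..0+n} \<and> j\<in>{Suc 0..0+n} \<and> i<j \<and> \<tau> j < \<tau> i}"
    by auto
  then show ?thesis unfolding inv_count_def inv_on_def by simp
qed

context
  fixes n m0 c :: nat and Z Z' :: "nat \<Rightarrow> nat"
  assumes m0n: "2 * m0 \<le> n" and cn: "c \<le> n"
    and bL: "\<And>k. k \<in> {1..m0} \<Longrightarrow> mal_inj Z k \<le> c"
    and bR: "\<And>j. j \<in> {1..m0} \<Longrightarrow> mal_inj Z' j \<le> n - c"
begin

definition Lv :: "nat \<Rightarrow> nat set" where "Lv t = mal_inj Z ` {1..t}"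
definition Rv :: "nat \<Rightarrow> nat set" where "Rv t = (\<lambda>y. n + 1 - y) ` mal_inj Z' ` {1..t}"
definition Tset :: "nat \<Rightarrow> nat set" where "Tset t = {1..n} - Lv t - Rv t"

lemma Lv_le: "t \<le> m0 \<Longrightarrow> x \<in> Lv t \<Longrightarrow> x \<le> c \<and> 1 \<le> x"
  unfolding Lv_def using bL mal_inj_ge1 by auto

lemma Rv_ge: "t \<le> m0 \<Longrightarrow> x \<in> Rv t \<Longrightarrow> c < x \<and> x \<le> n"
proof -
  assume t: "t \<le> m0" and x: "x \<in> Rv t"
  then obtain j where j: "j \<in> {1..t}" "x = n + 1 - mal_inj Z' j" unfolding Rv_def by auto
  have "mal_inj Z' j \<le> n - c" "mal_inj Z' j \<ge> 1" using bR[of j] mal_inj_ge1[of j] j t by auto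
  then show ?thesis using j cn by auto
qed

lemma card_Tset: "t \<le> m0 \<Longrightarrow> card (Tset t) = n - 2 * t"
proof -
  assume t: "t \<le> m0"
  have iL: "inj_on (mal_inj Z) {1..t}" by (rule inj_on_subset[OF mal_inj_inj]) auto
  have iR: "inj_on (mal_inj Z') {1..t}" by (rule inj_on_subset[OF mal_inj_inj]) auto
  have cL: "card (Lv t) = t" unfolding Lv_def using card_image[OF iL] by simp
  have sub: "mal_inj Z' ` {1..t} \<subseteq> {..n}" using bR t by fastforce
  have "inj_on (\<lambda>y. n + 1 - y) {..n}" by (auto simp: inj_on_def)
  then have "inj_on (\<lambda>y. n + 1 - y) (mal_inj Z' ` {1..t})" using sub by (rule inj_on_subset)
  then have cR: "card (Rv t) = t" unfolding Rv_def using card_image[OF iR] by (simp add: card_image)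
  have LS: "Lv t \<subseteq> {1..n}" using Lv_le[OF t] cn by fastforce
  have RS: "Rv t \<subseteq> {1..n}" using Rv_ge[OF t] by fastforce
  have d: "Lv t \<inter> Rv t = {}" using Lv_le[OF t] Rv_ge[OF t] by fastforce
  have "Tset t = {1..n} - (Lv t \<union> Rv t)" unfolding Tset_def by auto
  then have "card (Tset t) = card {1..n} - card (Lv t \<union> Rv t)"
    using LS RS by (simp add: card_Diff_subset finite_subset)
  also have "card (Lv t \<union> Rv t) = t + t" using d cL cR LS RS
    by (subst card_Un_disjoint) (auto intro: finite_subset)
  finally show ?thesis by simp
qed

lemma Tset_fin: "finite (Tset t)" unfolding Tset_def by auto

lemma left_step:
  assumes t: "t < m0"
  shows "mal_inj Z (Suc t) \<in> Tset t" "rk (Tset t) (mal_inj Z (Suc t)) = Z t"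
proof -
  define U where "U = {1..} - Lv t"
  define A where "A = mal_inj Z (Suc t)"
  have rU: "rk U A = Z t" unfolding U_def A_def Lv_def by (rule rk_mal_inj)
  have AU: "A \<in> U" unfolding A_def U_def Lv_def by (rule mal_inj_mem)
  have Ac: "A \<le> c" unfolding A_def using bL[of "Suc t"] t by auto
  have Rv: "\<And>x. x \<in> Rv t \<Longrightarrow> c < x" using Rv_ge[of t] t by (meson less_imp_le)
  show AT: "A \<in> Tset t" unfolding Tset_def using AU Ac cn Rv[of A] unfolding U_def by auto
  have "{y\<in>Tset t. y < A} = {y\<in>U. y < A}"
    unfolding Tset_def U_def using Ac cn Rv by fastforce
  then show "rk (Tset t) A = Z t" using rU unfolding rk_def by simp
qed

lemma right_step:
  assumes t: "t < m0"
  shows "n + 1 - mal_inj Z' (Suc t) \<in> Tset t - {mal_inj Z (Suc t)}"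
    "card {y\<in>Tset t - {mal_inj Z (Suc t)}. y > n + 1 - mal_inj Z' (Suc t)} = Z' t"
proof -
  define U' where "U' = {1..} - mal_inj Z' ` {1..t}"
  define B' where "B' = mal_inj Z' (Suc t)"
  define A where "A = mal_inj Z (Suc t)"
  define T1 where "T1 = Tset t - {A}"
  have rU: "rk U' B' = Z' t" unfolding U'_def B'_def by (rule rk_mal_inj)
  have BU: "B' \<in> U'" unfolding B'_def U'_def by (rule mal_inj_mem)
  have Bc: "B' \<le> n - c" "1 \<le> B'" using bR[of "Suc t"] t BU unfolding B'_def U'_def by auto
  have Ac: "A \<le> c" unfolding A_def using bL[of "Suc t"] t by auto
  have Lv: "\<And>x. x \<in> Lv t \<Longrightarrow> x \<le> c" using Lv_le[of t] t by (meson less_imp_le)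
  have Rv_iff: "\<And>y. y \<le> n \<Longrightarrow> 1 \<le> y \<Longrightarrow> n + 1 - y \<in> Rv t \<longleftrightarrow> y \<in> mal_inj Z' ` {1..t}"
  proof -
    fix y assume y: "y \<le> n" "1 \<le> y"
    show "n + 1 - y \<in> Rv t \<longleftrightarrow> y \<in> mal_inj Z' ` {1..t}"
    proof
      assume "n + 1 - y \<in> Rv t"
      then obtain j where j: "j \<in> {1..t}" "n + 1 - y = n + 1 - mal_inj Z' j" unfolding Rv_def by auto
      have "mal_inj Z' j \<le> n - c" "mal_inj Z' j \<ge> 1" using bR[of j] mal_inj_ge1[of j] j t by auto
      then have "y = mal_inj Z' j" using j y by linarith
      then show "y \<in> mal_inj Z' ` {1..t}" using j by auto
    next
      assume "y \<in> mal_inj Z' ` {1..t}" then show "n + 1 - y \<in> Rv t" unfolding Rv_def by auto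
    qed
  qed
  show "n + 1 - B' \<in> T1"
    unfolding T1_def Tset_def using Bc Ac Lv[of "n + 1 - B'"] Rv_iff[of B'] BU cn unfolding U'_def
    by auto
  have "{y\<in>T1. y > n + 1 - B'} = (\<lambda>y'. n + 1 - y') ` {y'\<in>U'. y' < B'}"
  proof (intro set_eqI iffI)
    fix y assume y: "y \<in> {y\<in>T1. y > n + 1 - B'}"
    then have y1: "1 \<le> y" "y \<le> n" "y \<notin> Rv t" unfolding T1_def Tset_def by auto
    have "n + 1 - y \<notin> mal_inj Z' ` {1..t}" using Rv_iff[of "n + 1 - y"] y1 by auto
    moreover have "n + 1 - y < B'" using y y1 Bc by auto
    ultimately have "n + 1 - y \<in> {y'\<in>U'. y' < B'}" unfolding U'_def using y1 by auto
    moreover have "y = n + 1 - (n + 1 - y)" using y1 by auto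
    ultimately show "y \<in> (\<lambda>y'. n + 1 - y') ` {y'\<in>U'. y' < B'}" by blast
  next
    fix y assume "y \<in> (\<lambda>y'. n + 1 - y') ` {y'\<in>U'. y' < B'}"
    then obtain y' where y': "y = n + 1 - y'" "y' \<in> U'" "y' < B'" by auto
    have y'1: "1 \<le> y'" "y' \<le> n" "y' \<notin> mal_inj Z' ` {1..t}" using y' Bc cn unfolding U'_def by auto
    have "y \<notin> Rv t" using Rv_iff[OF y'1(2,1)] y'1(3) y'(1) y'1(2) by auto
    moreover have "c < y" using y' Bc cn by auto
    ultimately show "y \<in> {y\<in>T1. y > n + 1 - B'}"
      unfolding T1_def Tset_def using y' y'1 Ac Lv by fastforce
  qed
  moreover have "inj_on (\<lambda>y'. n + 1 - y') {y'\<in>U'. y' < B'}"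
    using Bc cn by (auto simp: inj_on_def)
  ultimately show "card {y\<in>T1. y > n + 1 - B'} = Z' t" using rU unfolding rk_def
    by (simp add: card_image)
qed

lemma Tset_Suc: "Tset (Suc t) = Tset t - {mal_inj Z (Suc t)} - {n + 1 - mal_inj Z' (Suc t)}"
proof -
  have "{1..Suc t} = insert (Suc t) {1..t}" by auto
  then show ?thesis unfolding Tset_def Lv_def Rv_def by auto
qed

lemma coupling_gen:
  "t \<le> m0 \<Longrightarrow>
   (t < i \<and> i \<le> m0 \<longrightarrow> proc Z Z' t (n - 2 * t) (Tset t) i = mal_inj Z i) \<and>
   (n + 1 - m0 \<le> i \<and> i \<le> n - t \<longrightarrow> proc Z Z' t (n - 2 * t) (Tset t) i = n + 1 - mal_inj Z' (n + 1 - i))"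
proof (induction "m0 - t" arbitrary: t)
  case 0
  then have "t = m0" by simp
  then show ?case using m0n by auto
next
  case (Suc d)
  then have t: "t < m0" by simp
  define mm where "mm = n - 2 * t - 2"
  have nm: "n - 2 * t = Suc (Suc mm)" unfolding mm_def using t m0n by simp
  have nm2: "n - 2 * Suc t = mm" unfolding mm_def by simp
  define T where "T = Tset t"
  define l where "l = enumerate T (Z t mod Suc (Suc mm))"
  define T1 where "T1 = T - {l}"
  define r where "r = enumerate T1 (card T1 - 1 - Z' t mod Suc mm)"
  define rest where "rest = proc Z Z' (Suc t) mm (T1 - {r})"
  have cT: "card T = Suc (Suc mm)" unfolding T_def using card_Tset[of t] t nm by simp
  have fT: "finite T" unfolding T_def by (rule Tset_fin)
  have l: "l = mal_inj Z (Suc t)"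
  proof -
    have "Z t < card T" using left_step[OF t] enum_rk_fin(2)[OF fT] unfolding T_def by metis
    then have "Z t mod Suc (Suc mm) = Z t" using cT by simp
    then show ?thesis unfolding l_def using left_step[OF t] enum_rk_fin(1)[OF fT] unfolding T_def by metis
  qed
  have r: "r = n + 1 - mal_inj Z' (Suc t)"
  proof -
    define B where "B = n + 1 - mal_inj Z' (Suc t)"
    have BT1: "B \<in> T1" unfolding B_def T1_def l T_def using right_step(1)[OF t] .
    have cB: "card {y\<in>T1. y > B} = Z' t" unfolding B_def T1_def l T_def using right_step(2)[OF t] .
    have fT1: "finite T1" "card T1 = Suc mm" unfolding T1_def using fT cT l left_step(1)[OF t]
      unfolding T_def by auto
    have s: "rk T1 B + Z' t + 1 = Suc mm" using rk_plus_above[OF fT1(1) BT1] cB fT1 by simp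
    then have "Z' t mod Suc mm = Z' t" by simp
    then have "card T1 - 1 - Z' t mod Suc mm = rk T1 B" using s fT1 by simp
    then show ?thesis unfolding r_def B_def[symmetric] using enum_rk_fin(1)[OF fT1(1) BT1] by simp
  qed
  have eq: "proc Z Z' t (n - 2 * t) (Tset t) = rest(Suc t := l, Suc t + Suc mm := r)"
    unfolding nm T_def[symmetric]
    by (simp only: proc.simps Let_def l_def[symmetric] T1_def[symmetric] r_def[symmetric] rest_def[symmetric])
  have T1r: "T1 - {r} = Tset (Suc t)" unfolding T1_def r l T_def Tset_Suc ..
  have IH: "(Suc t < i \<and> i \<le> m0 \<longrightarrow> rest i = mal_inj Z i) \<and>
      (n + 1 - m0 \<le> i \<and> i \<le> n - Suc t \<longrightarrow> rest i = n + 1 - mal_inj Z' (n + 1 - i))"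
    using Suc.hyps(1)[of "Suc t"] Suc.hyps(2) t unfolding rest_def T1r nm2[symmetric] by simp
  have hi: "Suc t + Suc mm = n - t" using nm by simp
  show ?case
  proof (intro conjI impI)
    assume i: "t < i \<and> i \<le> m0"
    show "proc Z Z' t (n - 2 * t) (Tset t) i = mal_inj Z i"
    proof (cases "i = Suc t")
      case True then show ?thesis unfolding eq using l by simp
    next
      case False
      then have "i \<noteq> n - t" using i m0n by auto
      then show ?thesis unfolding eq hi using IH i False by auto
    qed
  next
    assume i: "n + 1 - m0 \<le> i \<and> i \<le> n - t"
    show "proc Z Z' t (n - 2 * t) (Tset t) i = n + 1 - mal_inj Z' (n + 1 - i)"
    proof (cases "i = n - t")
      case True
      then have "i \<noteq> Suc t" "n + 1 - i = Suc t" using t m0n by auto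
      then show ?thesis unfolding eq hi using r True by simp
    next
      case False
      then have "i \<noteq> Suc t" using i t m0n by auto
      then show ?thesis unfolding eq hi using IH i False by auto
    qed
  qed
qed

lemma coupling0:
  "(1 \<le> i \<and> i \<le> m0 \<longrightarrow> proc Z Z' 0 n {1..n} i = mal_inj Z i) \<and>
   (n + 1 - m0 \<le> i \<and> i \<le> n \<longrightarrow> proc Z Z' 0 n {1..n} i = n + 1 - mal_inj Z' (n + 1 - i))"
proof -
  have "Tset 0 = {1..n}" unfolding Tset_def Lv_def Rv_def by simp
  then show ?thesis using coupling_gen[of 0 i] by simp
qed

end

abbreviation G :: "real \<Rightarrow> nat measure" where "G q \<equiv> measure_pmf (geometric_pmf (1 - q))"
abbreviation PM :: "real \<Rightarrow> (nat \<Rightarrow> nat) measure" where "PM q \<equiv> PiM UNIV (\<lambda>_. G q)"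

lemma space_PM [simp]: "space (PM q) = UNIV"
  by (simp add: space_PiM)

lemma comp_meas: "(\<lambda>Z. Z k) \<in> PM q \<rightarrow>\<^sub>M count_space UNIV"
proof -
  have "(\<lambda>Z. Z k) \<in> PM q \<rightarrow>\<^sub>M G q" by (rule measurable_component_singleton) simp
  moreover have "PM q \<rightarrow>\<^sub>M G q = PM q \<rightarrow>\<^sub>M count_space UNIV" by (rule measurable_cong_sets) auto
  ultimately show ?thesis by simp
qed

lemma map_meas: "(\<lambda>Z. map Z [0..<k]) \<in> PM q \<rightarrow>\<^sub>M count_space UNIV"
proof (induction k)
  case 0 then show ?case by simp
next
  case (Suc k)
  have "(\<lambda>Z. (map Z [0..<k], Z k)) \<in> PM q \<rightarrow>\<^sub>M count_space UNIV \<Otimes>\<^sub>M count_space UNIV"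
    using Suc comp_meas by (rule measurable_Pair)
  then have p: "(\<lambda>Z. (map Z [0..<k], Z k)) \<in> PM q \<rightarrow>\<^sub>M count_space UNIV"
    by (simp add: pair_measure_countable)
  have "(\<lambda>(l, x). l @ [x::nat]) \<in> count_space UNIV \<rightarrow>\<^sub>M count_space UNIV" by simp
  from measurable_comp[OF p this] show ?case by (simp add: comp_def)
qed

lemma finite_dep_meas:
  fixes F :: "(nat \<Rightarrow> nat) \<Rightarrow> 'b::countable"
  assumes "\<And>Z Y. (\<forall>s<k. Z s = Y s) \<Longrightarrow> F Z = F Y"
  shows "F \<in> PM q \<rightarrow>\<^sub>M count_space UNIV"
proof -
  define F' where "F' l = F (\<lambda>s. if s < length l then l ! s else 0)" for l :: "nat list"
  have "F = (\<lambda>Z. F' (map Z [0..<k]))"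
    unfolding F'_def by (rule ext, rule assms) auto
  moreover have m: "F' \<in> count_space UNIV \<rightarrow>\<^sub>M count_space UNIV" by simp
  ultimately show ?thesis using measurable_comp[OF map_meas m] by (simp add: comp_def)
qed

lemma finite_dep_meas2:
  fixes F :: "(nat \<Rightarrow> nat) \<times> (nat \<Rightarrow> nat) \<Rightarrow> 'b::countable"
  assumes "\<And>Z Y Z' Y'. (\<forall>s<k. Z s = Y s \<and> Z' s = Y' s) \<Longrightarrow> F (Z, Z') = F (Y, Y')"
  shows "F \<in> PM q \<Otimes>\<^sub>M PM q \<rightarrow>\<^sub>M count_space UNIV"
proof -
  define F' where "F' p = F (\<lambda>s. if s < length (fst p) then fst p ! s else 0, \<lambda>s. if s < length (snd p) then snd p ! s else 0)" for p :: "nat list \<times> nat list"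
  have "F = (\<lambda>\<omega>. F' (map (fst \<omega>) [0..<k], map (snd \<omega>) [0..<k]))"
    unfolding F'_def by (rule ext, case_tac \<omega>, simp, rule assms) auto
  moreover have "(\<lambda>\<omega>. (map (fst \<omega>) [0..<k], map (snd \<omega>) [0..<k])) \<in> PM q \<Otimes>\<^sub>M PM q \<rightarrow>\<^sub>M count_space UNIV"
  proof -
    have "(\<lambda>\<omega>. (map (fst \<omega>) [0..<k], map (snd \<omega>) [0..<k])) \<in> PM q \<Otimes>\<^sub>M PM q \<rightarrow>\<^sub>M count_space UNIV \<Otimes>\<^sub>M count_space UNIV"
      by (intro measurable_Pair measurable_comp[OF measurable_fst map_meas, unfolded comp_def]
          measurable_comp[OF measurable_snd map_meas, unfolded comp_def])
    then show ?thesis by (simp add: pair_measure_countable)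
  qed
  moreover have m: "F' \<in> count_space UNIV \<rightarrow>\<^sub>M count_space UNIV" by simp
  ultimately show ?thesis using measurable_comp[OF _ m] by (simp add: comp_def)
qed

lemma mal_list_dep: "(\<forall>s<k. Z s = Y s) \<Longrightarrow> mal_list Z k = mal_list Y k"
  by (induction k) auto

lemma mal_inj_meas: "mal_inj \<in> PM q \<rightarrow>\<^sub>M NN"
proof -
  have "(\<lambda>Z. mal_inj Z i) \<in> PM q \<rightarrow>\<^sub>M count_space UNIV" for i
  proof (rule finite_dep_meas[of i])
    fix Z Y :: "nat \<Rightarrow> nat" assume "\<forall>s<i. Z s = Y s"
    then show "mal_inj Z i = mal_inj Y i" by (simp add: mal_inj_def mal_list_dep[of i Z Y])
  qed
  then show ?thesis by (intro measurable_PiM_single') auto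
qed

lemma eq_set_meas:
  fixes f g :: "'a \<Rightarrow> nat"
  assumes "f \<in> M \<rightarrow>\<^sub>M count_space UNIV" "g \<in> M \<rightarrow>\<^sub>M count_space UNIV"
  shows "{w\<in>space M. f w = g w} \<in> sets M"
proof -
  have "{w\<in>space M. f w = g w} = (\<Union>v. (f -` {v} \<inter> space M) \<inter> (g -` {v} \<inter> space M))" by auto
  also have "\<dots> \<in> sets M" using measurable_sets[OF assms(1)] measurable_sets[OF assms(2)] by auto
  finally show ?thesis .
qed

lemma emeasure_G_sums:
  assumes q: "0 < q" "q < 1" and s: "(\<lambda>i. (1-q) * q^i * indicator A i) sums s"
  shows "emeasure (G q) A = ennreal s"
proof -
  have pmf: "pmf (geometric_pmf (1 - q)) i = (1-q) * q^i" for i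
    using q by (simp add: pmf_geometric mult.commute)
  have "emeasure (G q) A = (\<integral>\<^sup>+ x. ennreal (pmf (geometric_pmf (1 - q)) x) \<partial>count_space A)"
    by (simp add: nn_integral_pmf)
  also have "\<dots> = (\<integral>\<^sup>+ x. ennreal (pmf (geometric_pmf (1 - q)) x) * indicator A x \<partial>count_space UNIV)"
    by (simp add: nn_integral_count_space_indicator)
  also have "\<dots> = (\<Sum>i. ennreal (pmf (geometric_pmf (1 - q)) i) * indicator A i)"
    by (simp add: nn_integral_count_space_nat)
  also have "\<dots> = (\<Sum>i. ennreal ((1-q) * q^i * indicator A i))"
    by (intro arg_cong[where f=suminf] ext) (simp add: pmf indicator_def)
  also have "\<dots> = ennreal s"
    by (rule suminf_ennreal_eq[OF _ s]) (use q in \<open>auto simp: indicator_def\<close>)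
  finally show ?thesis .
qed

lemma emeasure_G_mod:
  assumes q: "0 < q" "q < 1" and M: "0 < M" and c: "c < M"
  shows "emeasure (G q) {z. z mod M = c} = ennreal ((1-q) * q^c / (1 - q^M))"
proof (rule emeasure_G_sums[OF q])
  define g where "g t = c + M * t" for t
  have sm: "strict_mono g" unfolding g_def using M by (auto simp: strict_mono_def)
  have rg: "n \<notin> range g \<Longrightarrow> (1-q) * q^n * indicator {z. z mod M = c} n = 0" for n
  proof -
    assume "n \<notin> range g"
    moreover have "n mod M = c \<Longrightarrow> n = g (n div M)" unfolding g_def by (metis add.commute mult_div_mod_eq)
    ultimately show ?thesis by (auto simp: indicator_def)
  qed
  have qM: "norm (q^M) < 1" using q M by (simp add: power_less_one_iff abs_of_nonneg)
  have "(\<lambda>t. ((1-q) * q^c) * (q^M)^t) sums (((1-q) * q^c) * (1 / (1 - q^M)))"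
    by (rule sums_mult) (use geometric_sums[OF qM] in simp)
  moreover have "(\<lambda>t. (1-q) * q^(g t) * indicator {z. z mod M = c} (g t)) = (\<lambda>t. ((1-q) * q^c) * (q^M)^t)"
    unfolding g_def using c by (auto simp: indicator_def power_add power_mult[symmetric] mult_ac)
  ultimately have "(\<lambda>t. (1-q) * q^(g t) * indicator {z. z mod M = c} (g t)) sums ((1-q) * q^c / (1 - q^M))"
    by simp
  moreover have "(\<lambda>t. (1-q) * q^(g t) * indicator {z. z mod M = c} (g t)) sums ((1-q) * q^c / (1 - q^M)) \<longleftrightarrow>
      (\<lambda>i. (1-q) * q^i * indicator {z. z mod M = c} i) sums ((1-q) * q^c / (1 - q^M))"
    by (rule sums_mono_reindex[OF sm]) (rule rg)
  ultimately show "(\<lambda>i. (1-q) * q^i * indicator {z. z mod M = c} i) sums ((1-q) * q^c / (1 - q^M))"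
    by blast
qed

lemma emeasure_G_ge:
  assumes q: "0 < q" "q < 1"
  shows "emeasure (G q) {v..} = ennreal (q^v)"
proof (rule emeasure_G_sums[OF q])
  define g where "g t = v + t" for t
  have sm: "strict_mono g" unfolding g_def by (auto simp: strict_mono_def)
  have rg: "n \<notin> range g \<Longrightarrow> (1-q) * q^n * indicator {v..} n = 0" for n
  proof -
    assume "n \<notin> range g"
    moreover have "v \<le> n \<Longrightarrow> n = g (n - v)" unfolding g_def by simp
    ultimately show ?thesis by (auto simp: indicator_def)
  qed
  have qq: "norm q < 1" using q by simp
  have "(\<lambda>t. ((1-q) * q^v) * q^t) sums (((1-q) * q^v) * (1 / (1 - q)))"
    by (rule sums_mult) (use geometric_sums[OF qq] in simp)
  moreover have "(\<lambda>t. (1-q) * q^(g t) * indicator {v..} (g t)) = (\<lambda>t. ((1-q) * q^v) * q^t)"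
    unfolding g_def by (auto simp: indicator_def power_add)
  moreover have "((1-q) * q^v) * (1 / (1 - q)) = q^v" using q by simp
  ultimately have "(\<lambda>t. (1-q) * q^(g t) * indicator {v..} (g t)) sums (q^v)"
    by simp
  moreover have "(\<lambda>t. (1-q) * q^(g t) * indicator {v..} (g t)) sums (q^v) \<longleftrightarrow>
      (\<lambda>i. (1-q) * q^i * indicator {v..} i) sums (q^v)"
    by (rule sums_mono_reindex[OF sm]) (rule rg)
  ultimately show "(\<lambda>i. (1-q) * q^i * indicator {v..} i) sums (q^v)"
    by blast
qed

definition Fn :: "nat \<Rightarrow> (nat\<Rightarrow>nat) \<Rightarrow> (nat\<Rightarrow>nat) \<Rightarrow> nat \<Rightarrow> nat" where
  "Fn n Z Z' = (\<lambda>i. if i \<in> {1..n} then proc Z Z' 0 n {1..n} i else i)"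

lemma proc_dep: "\<forall>s<t+m. Z s = Y s \<and> Z' s = Y' s \<Longrightarrow> proc Z Z' t m T = proc Y Y' t m T"
proof (induction m arbitrary: t T rule: less_induct)
  case (less m)
  consider "m = 0" | "m = Suc 0" | k where "m = Suc (Suc k)" by (metis not0_implies_Suc)
  then show ?case
  proof cases
    case 1 then show ?thesis by simp
  next
    case 2 then show ?thesis by simp
  next
    case 3
    have zt: "Z t = Y t" "Z' t = Y' t" using less.prems 3 by auto
    have IH: "proc Z Z' (Suc t) k T' = proc Y Y' (Suc t) k T'" for T'
      using less.IH[of k "Suc t" T'] less.prems 3 by auto
    show ?thesis unfolding 3 by (simp add: Let_def zt IH)
  qed
qed

lemma FF_meas: "(\<lambda>\<omega>. Fn n (fst \<omega>) (snd \<omega>)) \<in> PM q \<Otimes>\<^sub>M PM q \<rightarrow>\<^sub>M NN"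
proof -
  have "(\<lambda>\<omega>. Fn n (fst \<omega>) (snd \<omega>) i) \<in> PM q \<Otimes>\<^sub>M PM q \<rightarrow>\<^sub>M count_space UNIV" for i
  proof (rule finite_dep_meas2[of n])
    fix Z Y Z' Y' :: "nat \<Rightarrow> nat" assume "\<forall>s<n. Z s = Y s \<and> Z' s = Y' s"
    then have "proc Z Z' 0 n {1..n} = proc Y Y' 0 n {1..n}" by (intro proc_dep) simp
    then show "Fn n (fst (Z, Z')) (snd (Z, Z')) i = Fn n (fst (Y, Y')) (snd (Y, Y')) i"
      by (simp add: Fn_def)
  qed
  then show ?thesis by (intro measurable_PiM_single') auto
qed

lemma Fn_perm: "Fn n Z Z' permutes {1..n}"
proof -
  have pb: "proc Z Z' 0 n {1..n} ` {Suc 0..0+n} = {1..n}" "inj_on (proc Z Z' 0 n {1..n}) {Suc 0..0+n}"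
    using proc_bij[of "{1..n}" n Z Z' 0] by auto
  have "bij_betw (proc Z Z' 0 n {1..n}) {1..n} {1..n}" using pb by (simp add: bij_betw_def)
  then have "bij_betw (Fn n Z Z') {1..n} {1..n}" by (rule bij_betw_cong[THEN iffD1, rotated]) (simp add: Fn_def)
  then show ?thesis by (rule bij_imp_permutes) (auto simp: Fn_def)
qed

lemma Fn_eq_codes:
  assumes "\<sigma> permutes {1..n}"
  shows "Fn n Z Z' = \<sigma> \<longleftrightarrow> codes_ok Z Z' \<sigma> 0 n"
proof -
  have "Fn n Z Z' = \<sigma> \<longleftrightarrow> (\<forall>i\<in>{Suc 0..0+n}. proc Z Z' 0 n {1..n} i = \<sigma> i)"
  proof
    assume "Fn n Z Z' = \<sigma>" then show "\<forall>i\<in>{Suc 0..0+n}. proc Z Z' 0 n {1..n} i = \<sigma> i"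
      by (auto simp: Fn_def)
  next
    assume h: "\<forall>i\<in>{Suc 0..0+n}. proc Z Z' 0 n {1..n} i = \<sigma> i"
    show "Fn n Z Z' = \<sigma>"
    proof
      fix i show "Fn n Z Z' i = \<sigma> i" using h permutes_not_in[OF assms, of i] by (auto simp: Fn_def)
    qed
  qed
  also have "\<dots> \<longleftrightarrow> codes_ok Z Z' \<sigma> 0 n"
    by (rule proc_codes) (use permutes_imp_bij[OF assms] in simp)
  finally show ?thesis .
qed

lemma lc_lt: "0 < m \<Longrightarrow> lc \<sigma> t m < m"
proof -
  assume m: "0 < m"
  have "lc \<sigma> t m \<le> card {Suc (Suc t)..t+m}" unfolding lc_def by (rule card_mono) auto
  then show ?thesis using m by simp
qed

lemma rc_lt: "1 < m \<Longrightarrow> rc \<sigma> t m < m - 1"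
proof -
  assume m: "1 < m"
  have "rc \<sigma> t m \<le> card {Suc (Suc t)..t+m-1}" unfolding rc_def by (rule card_mono) auto
  then show ?thesis using m by simp
qed

definition wgt :: "real \<Rightarrow> nat \<Rightarrow> nat \<Rightarrow> real" where
  "wgt q M c = (1-q) * q^c / (1 - q^M)"

definition EL :: "real \<Rightarrow> nat \<Rightarrow> (nat \<Rightarrow> nat) \<Rightarrow> (nat \<Rightarrow> nat) set" where
  "EL q n \<sigma> = prod_emb UNIV (\<lambda>_. G q) {..<(n+1) div 2}
     (PiE {..<(n+1) div 2} (\<lambda>s. {z. z mod (n - 2 * s) = lc \<sigma> s (n - 2 * s)}))"

definition ER :: "real \<Rightarrow> nat \<Rightarrow> (nat \<Rightarrow> nat) \<Rightarrow> (nat \<Rightarrow> nat) set" where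
  "ER q n \<sigma> = prod_emb UNIV (\<lambda>_. G q) {..<n div 2}
     (PiE {..<n div 2} (\<lambda>s. {z. z mod (n - 2 * s - 1) = rc \<sigma> s (n - 2 * s)}))"

lemma EL_iff: "Z \<in> EL q n \<sigma> \<longleftrightarrow> (\<forall>s<(n+1) div 2. Z s mod (n - 2 * s) = lc \<sigma> s (n - 2 * s))"
  by (auto simp: EL_def prod_emb_def space_PiM)

lemma ER_iff: "Z \<in> ER q n \<sigma> \<longleftrightarrow> (\<forall>s<n div 2. Z s mod (n - 2 * s - 1) = rc \<sigma> s (n - 2 * s))"
  by (auto simp: ER_def prod_emb_def space_PiM)

lemma EL_sets: "EL q n \<sigma> \<in> sets (PM q)"
  unfolding EL_def by (rule sets_PiM_I) auto

lemma ER_sets: "ER q n \<sigma> \<in> sets (PM q)"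
  unfolding ER_def by (rule sets_PiM_I) auto

lemma codes_EL_ER: "codes_ok Z Z' \<sigma> 0 n \<longleftrightarrow> Z \<in> EL q n \<sigma> \<and> Z' \<in> ER q n \<sigma>"
  by (simp add: codes_ok_def EL_iff ER_iff)

lemma emeasure_EL:
  assumes q: "0 < q" "q < 1"
  shows "emeasure (PM q) (EL q n \<sigma>) = ennreal (\<Prod>s<(n+1) div 2. wgt q (n - 2 * s) (lc \<sigma> s (n - 2 * s)))"
proof -
  have "emeasure (PM q) (EL q n \<sigma>) = (\<Prod>s<(n+1) div 2. emeasure (G q) {z. z mod (n - 2 * s) = lc \<sigma> s (n - 2 * s)})"
    unfolding EL_def by (rule emeasure_PiM_emb) (auto simp: prob_space_measure_pmf)
  also have "\<dots> = (\<Prod>s<(n+1) div 2. ennreal (wgt q (n - 2 * s) (lc \<sigma> s (n - 2 * s))))"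
  proof (rule prod.cong[OF refl])
    fix s assume "s \<in> {..<(n+1) div 2}"
    then have M: "0 < n - 2 * s" by auto
    show "emeasure (G q) {z. z mod (n - 2 * s) = lc \<sigma> s (n - 2 * s)} = ennreal (wgt q (n - 2 * s) (lc \<sigma> s (n - 2 * s)))"
      unfolding wgt_def by (rule emeasure_G_mod[OF q M lc_lt[OF M]])
  qed
  also have "\<dots> = ennreal (\<Prod>s<(n+1) div 2. wgt q (n - 2 * s) (lc \<sigma> s (n - 2 * s)))"
  proof (rule prod_ennreal)
    fix s assume "s \<in> {..<(n+1) div 2}"
    then have M: "0 < n - 2 * s" by auto
    have "q^(n - 2 * s) < 1" using q M by (simp add: power_less_one_iff)
    then show "0 \<le> wgt q (n - 2 * s) (lc \<sigma> s (n - 2 * s))" unfolding wgt_def using q by simp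
  qed
  finally show ?thesis .
qed

lemma emeasure_ER:
  assumes q: "0 < q" "q < 1"
  shows "emeasure (PM q) (ER q n \<sigma>) = ennreal (\<Prod>s<n div 2. wgt q (n - 2 * s - 1) (rc \<sigma> s (n - 2 * s)))"
proof -
  have "emeasure (PM q) (ER q n \<sigma>) = (\<Prod>s<n div 2. emeasure (G q) {z. z mod (n - 2 * s - 1) = rc \<sigma> s (n - 2 * s)})"
    unfolding ER_def by (rule emeasure_PiM_emb) (auto simp: prob_space_measure_pmf)
  also have "\<dots> = (\<Prod>s<n div 2. ennreal (wgt q (n - 2 * s - 1) (rc \<sigma> s (n - 2 * s))))"
  proof (rule prod.cong[OF refl])
    fix s assume "s \<in> {..<n div 2}"
    then have M: "1 < n - 2 * s" "0 < n - 2 * s - 1" by auto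
    show "emeasure (G q) {z. z mod (n - 2 * s - 1) = rc \<sigma> s (n - 2 * s)} = ennreal (wgt q (n - 2 * s - 1) (rc \<sigma> s (n - 2 * s)))"
      unfolding wgt_def by (rule emeasure_G_mod[OF q M(2) rc_lt[OF M(1)]])
  qed
  also have "\<dots> = ennreal (\<Prod>s<n div 2. wgt q (n - 2 * s - 1) (rc \<sigma> s (n - 2 * s)))"
  proof (rule prod_ennreal)
    fix s assume "s \<in> {..<n div 2}"
    then have M: "0 < n - 2 * s - 1" by auto
    have "q^(n - 2 * s - 1) < 1" using q M by (simp add: power_less_one_iff)
    then show "0 \<le> wgt q (n - 2 * s - 1) (rc \<sigma> s (n - 2 * s))" unfolding wgt_def using q by simp
  qed
  finally show ?thesis .
qed

definition Kn :: "real \<Rightarrow> nat \<Rightarrow> real" where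
  "Kn q n = (\<Prod>s<(n+1) div 2. (1-q) / (1 - q^(n - 2 * s))) * (\<Prod>s<n div 2. (1-q) / (1 - q^(n - 2 * s - 1)))"

lemma weight_prod:
  "(\<Prod>s<(n+1) div 2. wgt q (n - 2 * s) (lc \<sigma> s (n - 2 * s))) * (\<Prod>s<n div 2. wgt q (n - 2 * s - 1) (rc \<sigma> s (n - 2 * s)))
    = Kn q n * q ^ inv_count n \<sigma>"
proof -
  have w: "wgt q M c = ((1-q) / (1 - q^M)) * q^c" for M c unfolding wgt_def by simp
  have inv: "inv_count n \<sigma> = (\<Sum>s<(n+1) div 2. lc \<sigma> s (n - 2 * s)) + (\<Sum>s<n div 2. rc \<sigma> s (n - 2 * s))"
    using inv_count_eq[of n \<sigma>] inv_on_decomp[of \<sigma> 0 n] by simp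
  show ?thesis unfolding w prod.distrib Kn_def inv power_add power_sum by (simp add: mult_ac)
qed

abbreviation FF :: "nat \<Rightarrow> (nat \<Rightarrow> nat) \<times> (nat \<Rightarrow> nat) \<Rightarrow> nat \<Rightarrow> nat" where
  "FF n \<omega> \<equiv> Fn n (fst \<omega>) (snd \<omega>)"

lemma prob_PM: "prob_space (PM q)"
  by (rule prob_space_PiM) (simp add: prob_space_measure_pmf)

lemma prob_Omega: "prob_space (PM q \<Otimes>\<^sub>M PM q)"
  by (intro prob_space_pair prob_PM)

lemma space_Omega [simp]: "space (PM q \<Otimes>\<^sub>M PM q) = UNIV"
  by (simp add: space_pair_measure)

lemma preimage_single:
  assumes "\<sigma> permutes {1..n}"
  shows "FF n -` {\<sigma>} = EL q n \<sigma> \<times> ER q n \<sigma>"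
  using Fn_eq_codes[OF assms] codes_EL_ER by fastforce

lemma emeasure_single:
  assumes q: "0 < q" "q < 1" and s: "\<sigma> permutes {1..n}"
  shows "emeasure (PM q \<Otimes>\<^sub>M PM q) (EL q n \<sigma> \<times> ER q n \<sigma>) = ennreal (Kn q n * q ^ inv_count n \<sigma>)"
proof -
  interpret P: prob_space "PM q" by (rule prob_PM)
  have "emeasure (PM q \<Otimes>\<^sub>M PM q) (EL q n \<sigma> \<times> ER q n \<sigma>) = emeasure (PM q) (EL q n \<sigma>) * emeasure (PM q) (ER q n \<sigma>)"
    by (rule P.emeasure_pair_measure_Times) (auto intro: EL_sets ER_sets)
  also have "\<dots> = ennreal ((\<Prod>s<(n+1) div 2. wgt q (n - 2 * s) (lc \<sigma> s (n - 2 * s))) * (\<Prod>s<n div 2. wgt q (n - 2 * s - 1) (rc \<sigma> s (n - 2 * s))))"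
    unfolding emeasure_EL[OF q] emeasure_ER[OF q]
    by (rule ennreal_mult''[symmetric]) (auto intro!: prod_nonneg simp: wgt_def q power_le_one less_imp_le)
  finally show ?thesis unfolding weight_prod .
qed

lemma emeasure_FF:
  assumes q: "0 < q" "q < 1" and A: "A \<in> sets NN"
  shows "emeasure (distr (PM q \<Otimes>\<^sub>M PM q) NN (FF n)) A =
     (\<Sum>\<sigma>\<in>A \<inter> {\<sigma>. \<sigma> permutes {1..n}}. ennreal (Kn q n * q ^ inv_count n \<sigma>))"
proof -
  define P where "P = {\<sigma>. \<sigma> permutes {1..n}}"
  have fP: "finite P" unfolding P_def by (rule finite_permutations) simp
  have "emeasure (distr (PM q \<Otimes>\<^sub>M PM q) NN (FF n)) A = emeasure (PM q \<Otimes>\<^sub>M PM q) (FF n -` A)"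
    by (simp add: emeasure_distr[OF FF_meas A])
  also have "FF n -` A = (\<Union>\<sigma>\<in>A \<inter> P. EL q n \<sigma> \<times> ER q n \<sigma>)"
  proof -
    have "FF n -` A = (\<Union>\<sigma>\<in>A \<inter> P. FF n -` {\<sigma>})" unfolding P_def using Fn_perm by auto
    also have "\<dots> = (\<Union>\<sigma>\<in>A \<inter> P. EL q n \<sigma> \<times> ER q n \<sigma>)"
      by (rule SUP_cong[OF refl]) (auto simp: P_def preimage_single)
    finally show ?thesis .
  qed
  also have "emeasure (PM q \<Otimes>\<^sub>M PM q) (\<Union>\<sigma>\<in>A \<inter> P. EL q n \<sigma> \<times> ER q n \<sigma>) =
      (\<Sum>\<sigma>\<in>A \<inter> P. emeasure (PM q \<Otimes>\<^sub>M PM q) (EL q n \<sigma> \<times> ER q n \<sigma>))"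
  proof (rule sum_emeasure[symmetric])
    show "(\<lambda>\<sigma>. EL q n \<sigma> \<times> ER q n \<sigma>) ` (A \<inter> P) \<subseteq> sets (PM q \<Otimes>\<^sub>M PM q)"
      using EL_sets ER_sets by auto
    show "disjoint_family_on (\<lambda>\<sigma>. EL q n \<sigma> \<times> ER q n \<sigma>) (A \<inter> P)"
      unfolding disjoint_family_on_def
    proof (intro ballI impI)
      fix \<sigma> \<tau> assume s: "\<sigma> \<in> A \<inter> P" "\<tau> \<in> A \<inter> P" "\<sigma> \<noteq> \<tau>"
      have "EL q n \<sigma> \<times> ER q n \<sigma> = FF n -` {\<sigma>}" "EL q n \<tau> \<times> ER q n \<tau> = FF n -` {\<tau>}"
        using preimage_single[of \<sigma> n q] preimage_single[of \<tau> n q] s unfolding P_def by auto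
      then show "(EL q n \<sigma> \<times> ER q n \<sigma>) \<inter> (EL q n \<tau> \<times> ER q n \<tau>) = {}" using s(3) by auto
    qed
    show "finite (A \<inter> P)" using fP by simp
  qed
  also have "\<dots> = (\<Sum>\<sigma>\<in>A \<inter> P. ennreal (Kn q n * q ^ inv_count n \<sigma>))"
    by (rule sum.cong[OF refl]) (auto simp: P_def emeasure_single[OF q])
  finally show ?thesis unfolding P_def .
qed

lemma Kn_S:
  assumes q: "0 < q" "q < 1"
  shows "Kn q n * (\<Sum>\<sigma>\<in>{\<sigma>. \<sigma> permutes {1..n}}. q ^ inv_count n \<sigma>) = 1"
proof -
  interpret O: prob_space "PM q \<Otimes>\<^sub>M PM q" by (rule prob_Omega)
  have pd: "prob_space (distr (PM q \<Otimes>\<^sub>M PM q) NN (FF n))" by (rule O.prob_space_distr[OF FF_meas])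
  have "1 = emeasure (distr (PM q \<Otimes>\<^sub>M PM q) NN (FF n)) UNIV"
    using prob_space.emeasure_space_1[OF pd] by (simp add: space_PiM)
  also have "\<dots> = (\<Sum>\<sigma>\<in>{\<sigma>. \<sigma> permutes {1..n}}. ennreal (Kn q n * q ^ inv_count n \<sigma>))"
  proof -
    have "UNIV \<in> sets NN" using sets.top[of NN] by (simp add: space_PiM)
    from emeasure_FF[OF q this, of n] show ?thesis by simp
  qed
  also have "\<dots> = ennreal (\<Sum>\<sigma>\<in>{\<sigma>. \<sigma> permutes {1..n}}. Kn q n * q ^ inv_count n \<sigma>)"
  proof (rule sum_ennreal)
    have "0 \<le> Kn q n" unfolding Kn_def using q
      by (auto intro!: prod_nonneg mult_nonneg_nonneg divide_nonneg_nonneg simp: power_le_one less_imp_le)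
    then show "0 \<le> Kn q n * q ^ inv_count n \<sigma>" for \<sigma> using q by simp
  qed
  finally show ?thesis by (simp add: sum_distrib_left)
qed

lemma law_eq:
  assumes q: "0 < q" "q < 1"
  shows "distr (PM q \<Otimes>\<^sub>M PM q) NN (FF n) = distr (measure_pmf (mallows n q)) NN id"
proof (rule measure_eqI)
  define P where "P = {\<sigma>. \<sigma> permutes {1..n}}"
  define S where "S = (\<Sum>\<sigma>\<in>P. q ^ inv_count n \<sigma>)"
  have fP: "finite P" unfolding P_def by (rule finite_permutations) simp
  have KS: "Kn q n * S = 1" unfolding S_def P_def by (rule Kn_S[OF q])
  have Spos: "0 < S"
  proof -
    have "id \<in> P" unfolding P_def by (rule CollectI, rule permutes_id)
    then have "S = q ^ inv_count n id + (\<Sum>\<sigma>\<in>P - {id}. q ^ inv_count n \<sigma>)" unfolding S_def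
      using fP by (simp add: sum.remove)
    moreover have "0 \<le> (\<Sum>\<sigma>\<in>P - {id}. q ^ inv_count n \<sigma>)" using q by (simp add: sum_nonneg)
    moreover have "0 < q ^ inv_count n id" using q by simp
    ultimately show ?thesis by linarith
  qed
  have pm: "pmf (mallows n q) \<sigma> = (if \<sigma> \<in> P then q ^ inv_count n \<sigma> / S else 0)" for \<sigma>
  proof -
    have w: "mallows_weight n q = (\<lambda>\<sigma>. if \<sigma> \<in> P then q ^ inv_count n \<sigma> / S else 0)"
      unfolding mallows_weight_def P_def S_def by auto
    have "(\<integral>\<^sup>+ x. ennreal (mallows_weight n q x) \<partial>count_space UNIV) = (\<Sum>x\<in>P. ennreal (mallows_weight n q x))"
      by (rule nn_integral_count_space'[OF fP]) (auto simp: w)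
    also have "\<dots> = ennreal (\<Sum>x\<in>P. mallows_weight n q x)"
      by (rule sum_ennreal) (use q Spos in \<open>auto simp: w\<close>)
    also have "(\<Sum>x\<in>P. mallows_weight n q x) = (\<Sum>x\<in>P. q ^ inv_count n x / S)"
      by (rule sum.cong) (auto simp: w)
    also have "\<dots> = 1" using Spos unfolding S_def by (simp add: sum_divide_distrib[symmetric])
    finally have "(\<integral>\<^sup>+ x. ennreal (mallows_weight n q x) \<partial>count_space UNIV) = 1" by simp
    moreover have "\<And>x. 0 \<le> mallows_weight n q x" using q Spos by (simp add: w)
    ultimately show ?thesis unfolding mallows_def by (simp add: pmf_embed_pmf w)
  qed
  show "sets (distr (PM q \<Otimes>\<^sub>M PM q) NN (FF n)) = sets (distr (measure_pmf (mallows n q)) NN id)" by simp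
  fix A assume "A \<in> sets (distr (PM q \<Otimes>\<^sub>M PM q) NN (FF n))"
  then have A: "A \<in> sets NN" by simp
  have idm: "id \<in> measure_pmf (mallows n q) \<rightarrow>\<^sub>M NN" by (simp add: measurable_pmf_measure1 space_PiM)
  have sp: "set_pmf (mallows n q) \<subseteq> P" using pm by (auto simp: set_pmf_eq split: if_splits)
  have "emeasure (distr (measure_pmf (mallows n q)) NN id) A = emeasure (measure_pmf (mallows n q)) A"
    by (simp add: emeasure_distr[OF idm A])
  also have "\<dots> = emeasure (measure_pmf (mallows n q)) (A \<inter> P)"
  proof -
    have "A \<inter> set_pmf (mallows n q) = (A \<inter> P) \<inter> set_pmf (mallows n q)" using sp by auto
    then show ?thesis by (metis emeasure_Int_set_pmf)
  qed
  also have "\<dots> = ennreal (\<Sum>\<sigma>\<in>A \<inter> P. pmf (mallows n q) \<sigma>)"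
    by (rule emeasure_measure_pmf_finite) (use fP in simp)
  also have "\<dots> = (\<Sum>\<sigma>\<in>A \<inter> P. ennreal (Kn q n * q ^ inv_count n \<sigma>))"
  proof -
    have "(\<Sum>\<sigma>\<in>A \<inter> P. pmf (mallows n q) \<sigma>) = (\<Sum>\<sigma>\<in>A \<inter> P. Kn q n * q ^ inv_count n \<sigma>)"
    proof (rule sum.cong[OF refl])
      fix \<sigma> assume "\<sigma> \<in> A \<inter> P"
      then show "pmf (mallows n q) \<sigma> = Kn q n * q ^ inv_count n \<sigma>"
        using KS Spos by (simp add: pm field_simps)
    qed
    moreover have "0 \<le> Kn q n"
    proof -
      have "Kn q n = 1 / S" using KS Spos by (simp add: field_simps)
      then show ?thesis using Spos by simp
    qed
    ultimately show ?thesis using q by (simp add: sum_ennreal)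
  qed
  also have "\<dots> = emeasure (distr (PM q \<Otimes>\<^sub>M PM q) NN (FF n)) A"
    using emeasure_FF[OF q A, of n] unfolding P_def by simp
  finally show "emeasure (distr (PM q \<Otimes>\<^sub>M PM q) NN (FF n)) A = emeasure (distr (measure_pmf (mallows n q)) NN id) A"
    by simp
qed

lemma int_eq_iff: "(int a = int n + 1 - int b) = (a + b = n + 1)"
  by linarith

lemma comp_NN: "(\<lambda>x. x i) \<in> NN \<rightarrow>\<^sub>M count_space UNIV"
  by (rule measurable_component_singleton) simp

lemma good_meas: "good_event g n \<in> sets (NN \<Otimes>\<^sub>M NN \<Otimes>\<^sub>M NN)"
proof -
  define I1 where "I1 = {i::nat. 1 \<le> i \<and> real i \<le> real n / 2 - g n}"
  define I2 where "I2 = {i::nat. real n / 2 + g n \<le> real i \<and> i \<le> n}"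
  define E1 where "E1 i = {w::(nat\<Rightarrow>nat)\<times>(nat\<Rightarrow>nat)\<times>(nat\<Rightarrow>nat). i \<in> I1 \<longrightarrow> fst w i = fst (snd w) i}" for i
  define E2 where "E2 i = {w::(nat\<Rightarrow>nat)\<times>(nat\<Rightarrow>nat)\<times>(nat\<Rightarrow>nat). i \<in> I2 \<longrightarrow> fst w i + snd (snd w) (n + 1 - i) = n + 1}" for i
  have eq: "good_event g n = (\<Inter>i. E1 i) \<inter> (\<Inter>i. E2 i)"
    unfolding good_event_def E1_def E2_def I1_def I2_def by (auto simp: int_eq_iff)
  have sp: "space (NN \<Otimes>\<^sub>M NN \<Otimes>\<^sub>M NN) = UNIV" by (simp add: space_pair_measure space_PiM)
  have m1: "(\<lambda>w::(nat\<Rightarrow>nat)\<times>(nat\<Rightarrow>nat)\<times>(nat\<Rightarrow>nat). fst w i) \<in> NN \<Otimes>\<^sub>M NN \<Otimes>\<^sub>M NN \<rightarrow>\<^sub>M count_space UNIV" for i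
    using measurable_comp[OF measurable_fst comp_NN] by (simp add: comp_def)
  have m2: "(\<lambda>w::(nat\<Rightarrow>nat)\<times>(nat\<Rightarrow>nat)\<times>(nat\<Rightarrow>nat). fst (snd w) i) \<in> NN \<Otimes>\<^sub>M NN \<Otimes>\<^sub>M NN \<rightarrow>\<^sub>M count_space UNIV" for i
    using measurable_comp[OF measurable_comp[OF measurable_snd measurable_fst] comp_NN] by (simp add: comp_def)
  have m3: "(\<lambda>w::(nat\<Rightarrow>nat)\<times>(nat\<Rightarrow>nat)\<times>(nat\<Rightarrow>nat). snd (snd w) i) \<in> NN \<Otimes>\<^sub>M NN \<Otimes>\<^sub>M NN \<rightarrow>\<^sub>M count_space UNIV" for i
    using measurable_comp[OF measurable_comp[OF measurable_snd measurable_snd] comp_NN] by (simp add: comp_def)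
  have "E1 i \<in> sets (NN \<Otimes>\<^sub>M NN \<Otimes>\<^sub>M NN)" for i
  proof (cases "i \<in> I1")
    case True
    then have "E1 i = {w\<in>space (NN \<Otimes>\<^sub>M NN \<Otimes>\<^sub>M NN). fst w i = fst (snd w) i}" unfolding E1_def sp by auto
    then show ?thesis using eq_set_meas[OF m1 m2] by simp
  next
    case False
    then have "E1 i = space (NN \<Otimes>\<^sub>M NN \<Otimes>\<^sub>M NN)" unfolding E1_def sp by auto
    then show ?thesis by simp
  qed
  moreover have "E2 i \<in> sets (NN \<Otimes>\<^sub>M NN \<Otimes>\<^sub>M NN)" for i
  proof (cases "i \<in> I2")
    case True
    have ma: "(\<lambda>w::(nat\<Rightarrow>nat)\<times>(nat\<Rightarrow>nat)\<times>(nat\<Rightarrow>nat). fst w i + snd (snd w) (n + 1 - i)) \<in> NN \<Otimes>\<^sub>M NN \<Otimes>\<^sub>M NN \<rightarrow>\<^sub>M count_space UNIV"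
    proof -
      have "(\<lambda>w. (fst w i, snd (snd w) (n + 1 - i))) \<in> NN \<Otimes>\<^sub>M NN \<Otimes>\<^sub>M NN \<rightarrow>\<^sub>M count_space UNIV \<Otimes>\<^sub>M count_space UNIV"
        using m1 m3 by (rule measurable_Pair)
      then have "(\<lambda>w. (fst w i, snd (snd w) (n + 1 - i))) \<in> NN \<Otimes>\<^sub>M NN \<Otimes>\<^sub>M NN \<rightarrow>\<^sub>M count_space UNIV"
        by (simp add: pair_measure_countable)
      from measurable_comp[OF this, of "\<lambda>(a, b). a + b" "count_space UNIV"] show ?thesis
        by (simp add: comp_def)
    qed
    have "E2 i = {w\<in>space (NN \<Otimes>\<^sub>M NN \<Otimes>\<^sub>M NN). fst w i + snd (snd w) (n + 1 - i) = (\<lambda>_. n + 1) w}"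
      unfolding E2_def sp using True by auto
    then show ?thesis using eq_set_meas[OF ma] by simp
  next
    case False
    then have "E2 i = space (NN \<Otimes>\<^sub>M NN \<Otimes>\<^sub>M NN)" unfolding E2_def sp by auto
    then show ?thesis by simp
  qed
  ultimately show ?thesis unfolding eq by auto
qed

lemma tail_fst:
  assumes q: "0 < q" "q < 1"
  shows "measure (PM q \<Otimes>\<^sub>M PM q) {\<omega>. v \<le> fst \<omega> s} = q ^ v"
    "measure (PM q \<Otimes>\<^sub>M PM q) {\<omega>. v \<le> snd \<omega> s} = q ^ v"
    "{\<omega>. v \<le> fst \<omega> s} \<in> sets (PM q \<Otimes>\<^sub>M PM q)" "{\<omega>. v \<le> snd \<omega> s} \<in> sets (PM q \<Otimes>\<^sub>M PM q)"
proof -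
  interpret P: prob_space "PM q" by (rule prob_PM)
  define E where "E = prod_emb UNIV (\<lambda>_. G q) {s} (PiE {s} (\<lambda>_. {v..}))"
  have E: "E = {Z. v \<le> Z s}" unfolding E_def by (auto simp: prod_emb_def space_PiM)
  have Es: "E \<in> sets (PM q)" unfolding E_def by (rule sets_PiM_I) auto
  have "emeasure (PM q) E = (\<Prod>i\<in>{s}. emeasure (G q) {v..})"
    unfolding E_def by (rule emeasure_PiM_emb) (auto simp: prob_space_measure_pmf)
  then have eE: "emeasure (PM q) E = ennreal (q ^ v)" using emeasure_G_ge[OF q] by simp
  have U: "UNIV \<in> sets (PM q)" using sets.top[of "PM q"] by simp
  have e1: "{\<omega>. v \<le> fst \<omega> s} = E \<times> UNIV" "{\<omega>. v \<le> snd \<omega> s} = UNIV \<times> E" unfolding E by auto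
  show s1: "{\<omega>. v \<le> fst \<omega> s} \<in> sets (PM q \<Otimes>\<^sub>M PM q)" "{\<omega>. v \<le> snd \<omega> s} \<in> sets (PM q \<Otimes>\<^sub>M PM q)"
    unfolding e1 using Es U by auto
  have "emeasure (PM q \<Otimes>\<^sub>M PM q) {\<omega>. v \<le> fst \<omega> s} = ennreal (q ^ v)"
    unfolding e1 using P.emeasure_pair_measure_Times[OF Es U] eE P.emeasure_space_1 by simp
  moreover have "emeasure (PM q \<Otimes>\<^sub>M PM q) {\<omega>. v \<le> snd \<omega> s} = ennreal (q ^ v)"
    unfolding e1 using P.emeasure_pair_measure_Times[OF U Es] eE P.emeasure_space_1 by simp
  ultimately show "measure (PM q \<Otimes>\<^sub>M PM q) {\<omega>. v \<le> fst \<omega> s} = q ^ v"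
    "measure (PM q \<Otimes>\<^sub>M PM q) {\<omega>. v \<le> snd \<omega> s} = q ^ v"
    using q by (simp_all add: measure_def)
qed

lemma geo_sum_eq:
  "m0 \<le> c \<Longrightarrow> (\<Sum>k\<in>{1..m0}. (q::real) ^ (c + 1 - k)) = q ^ (c + 1 - m0) * (\<Sum>j<m0. q ^ j)"
proof (induction m0)
  case 0 then show ?case by simp
next
  case (Suc m)
  then have m: "m < c" by simp
  have "(\<Sum>k\<in>{1..Suc m}. q ^ (c + 1 - k)) = q ^ (c - m) + (\<Sum>k\<in>{1..m}. q ^ (c + 1 - k))"
    by (simp add: atLeastAtMostSuc_conv add.commute)
  also have "\<dots> = q ^ (c - m) + q ^ (c + 1 - m) * (\<Sum>j<m. q ^ j)" using Suc m by simp
  also have "q ^ (c + 1 - m) = q ^ (c - m) * q" using m by (simp add: Suc_diff_le less_imp_le mult.commute)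
  also have "q ^ (c - m) + q ^ (c - m) * q * (\<Sum>j<m. q ^ j) = q ^ (c - m) * (1 + q * (\<Sum>j<m. q ^ j))"
    by (simp add: algebra_simps)
  also have "1 + q * (\<Sum>j<m. q ^ j) = (\<Sum>j<Suc m. q ^ j)"
    by (subst sum.lessThan_Suc_shift) (simp add: sum_distrib_left)
  finally show ?case by simp
qed

lemma geo_sum_bound:
  fixes q :: real
  assumes q: "0 < q" "q < 1" and m: "m0 \<le> c"
  shows "(\<Sum>k\<in>{1..m0}. q ^ (c + 1 - k)) \<le> q ^ (c + 1 - m0) / (1 - q)"
proof -
  have "(\<Sum>k\<in>{1..m0}. q ^ (c + 1 - k)) = q ^ (c + 1 - m0) * (\<Sum>j<m0. q ^ j)" by (rule geo_sum_eq[OF m])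
  also have "(\<Sum>j<m0. q ^ j) = (1 - q ^ m0) / (1 - q)" using q by (simp add: sum_gp_strict)
  also have "q ^ (c + 1 - m0) * ((1 - q ^ m0) / (1 - q)) \<le> q ^ (c + 1 - m0) * (1 / (1 - q))"
    using q by (intro mult_left_mono divide_right_mono) auto
  finally show ?thesis by simp
qed

lemma nat_floor_le: "real (nat \<lfloor>x\<rfloor>) \<le> max 0 x"
  by (cases "0 \<le> x") auto

lemma good_bound:
  assumes q: "0 < q" "q < 1" and gn: "1 \<le> g n" and n2: "2 \<le> n"
  shows "1 - 2 * q ^ (n div 2 + 1 - (nat \<lfloor>real n / 2 - g n\<rfloor> + 1)) / (1 - q) \<le>
    measure (PM q \<Otimes>\<^sub>M PM q) ((\<lambda>\<omega>. (FF n \<omega>, mal_inj (fst \<omega>), mal_inj (snd \<omega>))) -` good_event g n)"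
proof -
  define c where "c = n div 2"
  define m0 where "m0 = nat \<lfloor>real n / 2 - g n\<rfloor> + 1"
  define trip where "trip \<omega> = (FF n \<omega>, mal_inj (fst \<omega>), mal_inj (snd \<omega>))" for \<omega>
  interpret O: prob_space "PM q \<Otimes>\<^sub>M PM q" by (rule prob_Omega)
  have m0r: "real m0 \<le> real n / 2"
  proof -
    have "real m0 \<le> max 0 (real n / 2 - g n) + 1" unfolding m0_def using nat_floor_le[of "real n / 2 - g n"] by simp
    also have "\<dots> \<le> real n / 2" using gn n2 by (auto simp: max_def)
    finally show ?thesis .
  qed
  then have m0n: "2 * m0 \<le> n" by linarith
  then have m0c: "m0 \<le> c" unfolding c_def by linarith
  have cn: "c \<le> n" unfolding c_def by simp
  define B1 where "B1 = (\<Union>k\<in>{1..m0}. {\<omega>::(nat\<Rightarrow>nat)\<times>(nat\<Rightarrow>nat). c + 1 - k \<le> fst \<omega> (k - 1)})"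
  define B2 where "B2 = (\<Union>k\<in>{1..m0}. {\<omega>::(nat\<Rightarrow>nat)\<times>(nat\<Rightarrow>nat). c + 1 - k \<le> snd \<omega> (k - 1)})"
  have B1s: "B1 \<in> sets (PM q \<Otimes>\<^sub>M PM q)" unfolding B1_def using tail_fst(3)[OF q] by auto
  have B2s: "B2 \<in> sets (PM q \<Otimes>\<^sub>M PM q)" unfolding B2_def using tail_fst(4)[OF q] by auto
  have trip_meas: "trip \<in> PM q \<Otimes>\<^sub>M PM q \<rightarrow>\<^sub>M NN \<Otimes>\<^sub>M NN \<Otimes>\<^sub>M NN"
    unfolding trip_def
    by (intro measurable_Pair FF_meas measurable_comp[OF measurable_fst mal_inj_meas, unfolded comp_def]
        measurable_comp[OF measurable_snd mal_inj_meas, unfolded comp_def])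
  have Gs: "trip -` good_event g n \<in> sets (PM q \<Otimes>\<^sub>M PM q)"
    using measurable_sets[OF trip_meas good_meas] by simp
  have incl: "UNIV - (B1 \<union> B2) \<subseteq> trip -` good_event g n"
  proof
    fix \<omega> assume "\<omega> \<in> UNIV - (B1 \<union> B2)"
    then have nb: "\<And>k. k \<in> {1..m0} \<Longrightarrow> fst \<omega> (k - 1) < c + 1 - k" "\<And>k. k \<in> {1..m0} \<Longrightarrow> snd \<omega> (k - 1) < c + 1 - k"
      unfolding B1_def B2_def by (auto simp: not_le)
    define Z where "Z = fst \<omega>"
    define Z' where "Z' = snd \<omega>"
    have bL: "mal_inj Z k \<le> c" if "k \<in> {1..m0}" for k
    proof -
      have "mal_inj Z (Suc (k - 1)) \<le> Suc (k - 1) + Z (k - 1)" by (rule mal_inj_bound)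
      then show ?thesis using nb(1)[OF that] that m0c unfolding Z_def by auto
    qed
    have bR: "mal_inj Z' k \<le> n - c" if "k \<in> {1..m0}" for k
    proof -
      have "mal_inj Z' (Suc (k - 1)) \<le> Suc (k - 1) + Z' (k - 1)" by (rule mal_inj_bound)
      then show ?thesis using nb(2)[OF that] that m0c unfolding Z'_def c_def by auto
    qed
    note cp = coupling0[OF m0n cn bL bR]
    have fs: "FF n \<omega> = Fn n Z Z'" unfolding Z_def Z'_def by simp
    have L: "\<forall>i. 1 \<le> i \<and> real i \<le> real n / 2 - g n \<longrightarrow> Fn n Z Z' i = mal_inj Z i"
    proof (intro allI impI)
      fix i assume i: "1 \<le> i \<and> real i \<le> real n / 2 - g n"
      then have im: "i \<le> m0" unfolding m0_def by linarith
      have "i \<le> n" using im m0n by simp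
      then show "Fn n Z Z' i = mal_inj Z i"
        using cp[of i] i im unfolding Fn_def by auto
    qed
    have R: "\<forall>i. real n / 2 + g n \<le> real i \<and> i \<le> n \<longrightarrow> int (Fn n Z Z' i) = int n + 1 - int (mal_inj Z' (n + 1 - i))"
    proof (intro allI impI)
      fix i assume i: "real n / 2 + g n \<le> real i \<and> i \<le> n"
      have "real (n + 1 - i) \<le> real n / 2 - g n + 1" using i by linarith
      then have i0: "n + 1 - i \<le> m0" unfolding m0_def by linarith
      then have i1: "n + 1 - m0 \<le> i" by linarith
      have ipos: "1 \<le> i" using i gn by linarith
      have v: "Fn n Z Z' i = n + 1 - mal_inj Z' (n + 1 - i)" using cp[of i] i i1 ipos unfolding Fn_def by auto
      have "mal_inj Z' (n + 1 - i) \<le> n - c" using bR[of "n + 1 - i"] i0 i by auto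
      then show "int (Fn n Z Z' i) = int n + 1 - int (mal_inj Z' (n + 1 - i))"
        unfolding v by simp
    qed
    show "\<omega> \<in> trip -` good_event g n"
      unfolding trip_def good_event_def fs using L R by (simp add: Z_def Z'_def)
  qed
  have "measure (PM q \<Otimes>\<^sub>M PM q) (UNIV - (B1 \<union> B2)) \<le> measure (PM q \<Otimes>\<^sub>M PM q) (trip -` good_event g n)"
    by (rule O.finite_measure_mono[OF incl Gs])
  moreover have "measure (PM q \<Otimes>\<^sub>M PM q) (UNIV - (B1 \<union> B2)) = 1 - measure (PM q \<Otimes>\<^sub>M PM q) (B1 \<union> B2)"
    using O.prob_compl[of "B1 \<union> B2"] B1s B2s by simp
  moreover have "measure (PM q \<Otimes>\<^sub>M PM q) (B1 \<union> B2) \<le> measure (PM q \<Otimes>\<^sub>M PM q) B1 + measure (PM q \<Otimes>\<^sub>M PM q) B2"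
    by (rule measure_Un_le[OF B1s B2s])
  moreover have "measure (PM q \<Otimes>\<^sub>M PM q) B1 \<le> q ^ (c + 1 - m0) / (1 - q)"
  proof -
    have "measure (PM q \<Otimes>\<^sub>M PM q) B1 \<le> (\<Sum>k\<in>{1..m0}. measure (PM q \<Otimes>\<^sub>M PM q) {\<omega>. c + 1 - k \<le> fst \<omega> (k - 1)})"
      unfolding B1_def by (rule measure_UNION_le) (use tail_fst(3)[OF q] in auto)
    also have "\<dots> = (\<Sum>k\<in>{1..m0}. q ^ (c + 1 - k))" using tail_fst(1)[OF q] by simp
    also have "\<dots> \<le> q ^ (c + 1 - m0) / (1 - q)" by (rule geo_sum_bound[OF q m0c])
    finally show ?thesis .
  qed
  moreover have "measure (PM q \<Otimes>\<^sub>M PM q) B2 \<le> q ^ (c + 1 - m0) / (1 - q)"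
  proof -
    have "measure (PM q \<Otimes>\<^sub>M PM q) B2 \<le> (\<Sum>k\<in>{1..m0}. measure (PM q \<Otimes>\<^sub>M PM q) {\<omega>. c + 1 - k \<le> snd \<omega> (k - 1)})"
      unfolding B2_def by (rule measure_UNION_le) (use tail_fst(4)[OF q] in auto)
    also have "\<dots> = (\<Sum>k\<in>{1..m0}. q ^ (c + 1 - k))" using tail_fst(2)[OF q] by simp
    also have "\<dots> \<le> q ^ (c + 1 - m0) / (1 - q)" by (rule geo_sum_bound[OF q m0c])
    finally show ?thesis .
  qed
  ultimately have "1 - 2 * q ^ (c + 1 - m0) / (1 - q) \<le> measure (PM q \<Otimes>\<^sub>M PM q) (trip -` good_event g n)"
    by linarith
  then show ?thesis unfolding c_def m0_def trip_def .
qed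

lemma D_bound:
  assumes gn: "1 \<le> g n" and n2: "2 \<le> n"
  shows "min (g n) (real n / 2) - 1/2 \<le> real (n div 2 + 1 - (nat \<lfloor>real n / 2 - g n\<rfloor> + 1))"
proof -
  define m0 where "m0 = nat \<lfloor>real n / 2 - g n\<rfloor> + 1"
  have nd: "real n / 2 - 1/2 \<le> real (n div 2)" by linarith
  have m0r: "real m0 \<le> max 0 (real n / 2 - g n) + 1" unfolding m0_def using nat_floor_le[of "real n / 2 - g n"] by simp
  also have "\<dots> \<le> real n / 2" using gn n2 by (auto simp: max_def)
  finally have "2 * m0 \<le> n" by linarith
  then have le: "m0 \<le> n div 2" by linarith
  have "min (g n) (real n / 2) - 1/2 \<le> real (n div 2) + 1 - real m0"
  proof (cases "0 \<le> real n / 2 - g n")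
    case True then show ?thesis using m0r nd by (simp add: max_def min_def)
  next
    case False
    then have "m0 = 1" unfolding m0_def by simp
    then show ?thesis using False nd by (simp add: min_def)
  qed
  then show ?thesis using le unfolding m0_def[symmetric] by (simp add: of_nat_diff)
qed

theorem lemma4p1:
  fixes q :: real and g :: "nat \<Rightarrow> real"
  assumes "0 < q" "q < 1"
    and "filterlim g at_top sequentially"
  shows "\<exists>\<mu> :: nat \<Rightarrow> ((nat \<Rightarrow> nat) \<times> (nat \<Rightarrow> nat) \<times> (nat \<Rightarrow> nat)) measure.
     (\<forall>n. prob_space (\<mu> n) \<and> sets (\<mu> n) = sets (NN \<Otimes>\<^sub>M NN \<Otimes>\<^sub>M NN) \<and>
          distr (\<mu> n) NN fst = distr (measure_pmf (mallows n q)) NN id \<and>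
          distr (\<mu> n) (NN \<Otimes>\<^sub>M NN) snd = mallows_N q \<Otimes>\<^sub>M mallows_N q) \<and>
     ((\<lambda>n. measure (\<mu> n) (good_event g n)) \<longlonglongrightarrow> 1)"
proof -
  have q: "0 < q" "q < 1" using assms(1,2) .
  define trip where "trip n \<omega> = (FF n \<omega>, mal_inj (fst \<omega>), mal_inj (snd \<omega>))" for n \<omega>
  define \<mu> where "\<mu> n = distr (PM q \<Otimes>\<^sub>M PM q) (NN \<Otimes>\<^sub>M NN \<Otimes>\<^sub>M NN) (trip n)" for n
  interpret O: prob_space "PM q \<Otimes>\<^sub>M PM q" by (rule prob_Omega)
  have tm: "trip n \<in> PM q \<Otimes>\<^sub>M PM q \<rightarrow>\<^sub>M NN \<Otimes>\<^sub>M NN \<Otimes>\<^sub>M NN" for n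
    unfolding trip_def
    by (intro measurable_Pair FF_meas measurable_comp[OF measurable_fst mal_inj_meas, unfolded comp_def]
        measurable_comp[OF measurable_snd mal_inj_meas, unfolded comp_def])
  have part1: "prob_space (\<mu> n) \<and> sets (\<mu> n) = sets (NN \<Otimes>\<^sub>M NN \<Otimes>\<^sub>M NN) \<and>
          distr (\<mu> n) NN fst = distr (measure_pmf (mallows n q)) NN id \<and>
          distr (\<mu> n) (NN \<Otimes>\<^sub>M NN) snd = mallows_N q \<Otimes>\<^sub>M mallows_N q" for n
  proof (intro conjI)
    show "prob_space (\<mu> n)" unfolding \<mu>_def by (rule O.prob_space_distr[OF tm])
    show "sets (\<mu> n) = sets (NN \<Otimes>\<^sub>M NN \<Otimes>\<^sub>M NN)" unfolding \<mu>_def by simp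
    have "distr (\<mu> n) NN fst = distr (PM q \<Otimes>\<^sub>M PM q) NN (fst \<circ> trip n)"
      unfolding \<mu>_def by (rule distr_distr[OF measurable_fst tm])
    also have "fst \<circ> trip n = FF n" by (simp add: trip_def comp_def)
    also have "distr (PM q \<Otimes>\<^sub>M PM q) NN (FF n) = distr (measure_pmf (mallows n q)) NN id"
      by (rule law_eq[OF q])
    finally show "distr (\<mu> n) NN fst = distr (measure_pmf (mallows n q)) NN id" .
    have "distr (\<mu> n) (NN \<Otimes>\<^sub>M NN) snd = distr (PM q \<Otimes>\<^sub>M PM q) (NN \<Otimes>\<^sub>M NN) (snd \<circ> trip n)"
      unfolding \<mu>_def by (rule distr_distr[OF measurable_snd tm])
    also have "snd \<circ> trip n = (\<lambda>(x, y). (mal_inj x, mal_inj y))" by (auto simp: trip_def comp_def)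
    also have "distr (PM q \<Otimes>\<^sub>M PM q) (NN \<Otimes>\<^sub>M NN) (\<lambda>(x, y). (mal_inj x, mal_inj y)) =
        distr (PM q) NN mal_inj \<Otimes>\<^sub>M distr (PM q) NN mal_inj"
    proof (rule pair_measure_distr[symmetric, OF mal_inj_meas mal_inj_meas])
      interpret P: prob_space "PM q" by (rule prob_PM)
      show "sigma_finite_measure (distr (PM q) NN mal_inj)"
        by (rule prob_space_imp_sigma_finite, rule P.prob_space_distr[OF mal_inj_meas])
    qed
    also have "\<dots> = mallows_N q \<Otimes>\<^sub>M mallows_N q" unfolding mallows_N_def ..
    finally show "distr (\<mu> n) (NN \<Otimes>\<^sub>M NN) snd = mallows_N q \<Otimes>\<^sub>M mallows_N q" .
  qed
  have meas_eq: "measure (\<mu> n) (good_event g n) = measure (PM q \<Otimes>\<^sub>M PM q) (trip n -` good_event g n)" for n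
    unfolding \<mu>_def using measure_distr[OF tm good_meas] by simp
  have le1: "measure (\<mu> n) (good_event g n) \<le> 1" for n
    using part1[of n] prob_space.prob_le_1 by blast
  have lim: "(\<lambda>n. measure (\<mu> n) (good_event g n)) \<longlonglongrightarrow> 1"
  proof (rule tendstoI)
    fix e :: real assume e: "0 < e"
    have "(\<lambda>N. q ^ N) \<longlonglongrightarrow> 0" using q by (intro LIMSEQ_power_zero) simp
    moreover have "0 < e * (1 - q) / 2" using e q by simp
    ultimately have "eventually (\<lambda>N. q ^ N < e * (1 - q) / 2) sequentially" by (rule order_tendstoD(2))
    then obtain N0 where N0: "q ^ N0 < e * (1 - q) / 2" unfolding eventually_sequentially by auto
    have ev1: "eventually (\<lambda>n. real N0 + 2 \<le> g n) sequentially"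
      using assms(3) unfolding filterlim_at_top by blast
    have ev2: "eventually (\<lambda>n. 2 * N0 + 4 \<le> n) sequentially" by (rule eventually_ge_at_top)
    show "eventually (\<lambda>n. dist (measure (\<mu> n) (good_event g n)) 1 < e) sequentially"
      using ev1 ev2
    proof eventually_elim
      case (elim n)
      define D where "D = n div 2 + 1 - (nat \<lfloor>real n / 2 - g n\<rfloor> + 1)"
      have gn: "1 \<le> g n" using elim by simp
      have n2: "2 \<le> n" using elim(2) by simp
      have "min (g n) (real n / 2) - 1/2 \<le> real D" unfolding D_def by (rule D_bound[of g n, OF gn n2])
      then have "N0 \<le> D" using elim by (simp add: min_def split: if_splits)
      then have qd: "q ^ D \<le> q ^ N0" using q by (intro power_decreasing) auto
      have "2 * q ^ D < e * (1 - q)" using qd N0 by linarith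
      then have "2 * q ^ D / (1 - q) < e" using q by (subst pos_divide_less_eq) auto
      moreover have "1 - 2 * q ^ D / (1 - q) \<le> measure (\<mu> n) (good_event g n)"
        using good_bound[of q g n, OF q gn n2] unfolding meas_eq trip_def D_def .
      ultimately show ?case using le1[of n] by (simp add: dist_real_def abs_if)
    qed
  qed
  show ?thesis using part1 lim by blast
qed

end
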